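(* Let $L=\bigoplus_{i=0}^N L_i$ be a Jordan splitting with $N\ge2$, let $L'$ be the associated lattice with decomposition $L'=\bigoplus_{i=0}^{N-1}L'_i$, and let $M\in\{L,L'\}$ with its given decomposition $M=\bigoplus_i M_i$. Let $0\le i\le j\le N$ if $M=L$ and $0\le i\le j\le N-1$ if $M=L'$. Then for all $g\in G_M$ and $x\in M_j$ we have $g(x)^M_i\in\mathfrak{p}_E^{j-i}M_i$.
   Context: $F$ is a non-archimedean local field with residue characteristic $p$, ring of integers $\mathcal{O}_F$, uniformiser $\varpi_F$. Fix $\epsilon\in\{\pm1\}$ and $(E,\sigma)$ one of: $E=F$, $\sigma=\mathrm{id}$; $E$ a quadratic field extension of $F$ with $\sigma$ the nontrivial automorphism; $E=F\oplus F$ with $\sigma(x,y)=(y,x)$; $E$ the quaternion division algebra over $F$ with its standard involution. Assume $p\ne2$ if $E$ is a ramified quadratic extension, or if $E=F$ and $\epsilon=1$. $\mathcal{O}_E$ is the maximal $\mathcal{O}_F$-order; $\varpi_E$ is a uniformiser of $\mathcal{O}_E$ if $E/F$ is ramified or $E$ is quaternion, and $\varpi_E=\varpi_F$ otherwise; $\mathfrak{p}_E=\varpi_E\mathcal{O}_E$. $L$ is a finite-rank $\mathcal{O}_E$-lattice with a $(\sigma,\epsilon)$-Hermitian form $\langle\ ,\ \rangle:L\times L\to\mathcal{O}_E$, nondegenerate on $V=L\otimes_{\mathcal{O}_F}F$; $L^\vee=\{x\in V:\langle x,L\rangle\subseteq\mathcal{O}_E\}$. A Jordan splitting is an orthogonal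 decomposition $L=\bigoplus_{i=0}^N L_i$ with $L_i^\vee=\mathfrak{p}_E^{-i}L_i$. For $N\ge2$, $L'=\bigoplus_{i=0}^{N-1}L'_i$ where $L'_i=L_i$ for $i\ne N-2$ and $L'_{N-2}=L_{N-2}\oplus\mathfrak{p}_E^{-1}L_N$. For $x\in V$ and a decomposition $M=\bigoplus_i M_i$, $x^M_i\in M_i\otimes F$ denotes the components with $x=\sum_i x^M_i$. $G_V$ is the isometry group of $V$ and $G_M\subseteq G_V$ the stabiliser of $M$. *)

theory Defs
  imports Main
begin

text \<open>F is a field with a normalised discrete valuation vF (value at 0 irrelevant, 0 is
treated as having valuation +infinity). O_F and the local-field axioms.\<close>

definition OF :: "('f::field \<Rightarrow> int) \<Rightarrow> 'f set" where
  "OF v = {x. x = 0 \<or> 0 \<le> v x}"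

text \<open>Non-archimedean local field: complete w.r.t. a discrete valuation, finite residue
field; the given element is a uniformiser (valuation 1).\<close>
definition nonarch_local_field :: "('f::field \<Rightarrow> int) \<Rightarrow> 'f \<Rightarrow> bool" where
  "nonarch_local_field v \<pi> \<longleftrightarrow>
     (\<forall>x y. x \<noteq> 0 \<longrightarrow> y \<noteq> 0 \<longrightarrow> v (x * y) = v x + v y) \<and>
     (\<forall>x y. x \<noteq> 0 \<longrightarrow> y \<noteq> 0 \<longrightarrow> x + y \<noteq> 0 \<longrightarrow> min (v x) (v y) \<le> v (x + y)) \<and>
     \<pi> \<noteq> 0 \<and> v \<pi> = 1 \<and>
     (\<forall>s::nat \<Rightarrow> 'f.
        (\<forall>k. \<exists>N. \<forall>m\<ge>N. \<forall>n\<ge>N. s m = s n \<or> k \<le> v (s m - s n)) \<longrightarrow>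
        (\<exists>l. \<forall>k. \<exists>N. \<forall>n\<ge>N. s n = l \<or> k \<le> v (s n - l))) \<and>
     (\<exists>R. finite R \<and> R \<subseteq> OF v \<and> (\<forall>a\<in>OF v. \<exists>r\<in>R. a = r \<or> 1 \<le> v (a - r)))"

text \<open>Residue characteristic different from 2, i.e. 2 is not in the maximal ideal of O_F.\<close>
definition res_char_not_2 :: "('f::field \<Rightarrow> int) \<Rightarrow> bool" where
  "res_char_not_2 v \<longleftrightarrow> (2::'f) \<noteq> 0 \<and> v 2 = 0"

definition F_algebra :: "('f::field \<Rightarrow> 'e::ring_1) \<Rightarrow> bool" where
  "F_algebra \<iota> \<longleftrightarrow> inj \<iota> \<and> \<iota> 1 = 1 \<and> (\<forall>a b. \<iota> (a + b) = \<iota> a + \<iota> b) \<and>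
     (\<forall>a b. \<iota> (a * b) = \<iota> a * \<iota> b) \<and> (\<forall>a x. \<iota> a * x = x * \<iota> a)"

definition F_dim :: "('f::field \<Rightarrow> 'e::ring_1) \<Rightarrow> nat \<Rightarrow> bool" where
  "F_dim \<iota> n \<longleftrightarrow> (\<exists>b::nat \<Rightarrow> 'e. \<forall>x. \<exists>!c::nat \<Rightarrow> 'f.
      (\<forall>k\<ge>n. c k = 0) \<and> x = (\<Sum>k<n. \<iota> (c k) * b k))"

definition ring_involution :: "('e::ring_1 \<Rightarrow> 'e) \<Rightarrow> bool" where
  "ring_involution \<sigma> \<longleftrightarrow> (\<forall>x y. \<sigma> (x + y) = \<sigma> x + \<sigma> y) \<and> (\<forall>x y. \<sigma> (x * y) = \<sigma> y * \<sigma> x) \<and>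
     \<sigma> 1 = 1 \<and> (\<forall>x. \<sigma> (\<sigma> x) = x)"

definition case_F :: "('f::field \<Rightarrow> 'e::ring_1) \<Rightarrow> ('e \<Rightarrow> 'e) \<Rightarrow> bool" where
  "case_F \<iota> \<sigma> \<longleftrightarrow> surj \<iota> \<and> \<sigma> = id"

definition case_quadratic :: "('f::field \<Rightarrow> 'e::ring_1) \<Rightarrow> ('e \<Rightarrow> 'e) \<Rightarrow> bool" where
  "case_quadratic \<iota> \<sigma> \<longleftrightarrow> (0::'e) \<noteq> 1 \<and> (\<forall>x y::'e. x * y = y * x) \<and>
     (\<forall>x::'e. x \<noteq> 0 \<longrightarrow> (\<exists>y. x * y = 1)) \<and> F_dim \<iota> 2 \<and>
     ring_involution \<sigma> \<and> (\<forall>a. \<sigma> (\<iota> a) = \<iota> a) \<and> \<sigma> \<noteq> id"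

definition case_split :: "('f::field \<Rightarrow> 'e::ring_1) \<Rightarrow> ('e \<Rightarrow> 'e) \<Rightarrow> bool" where
  "case_split \<iota> \<sigma> \<longleftrightarrow> (\<exists>\<phi>::'e \<Rightarrow> 'f \<times> 'f. bij \<phi> \<and>
     (\<forall>x y. \<phi> (x + y) = (fst (\<phi> x) + fst (\<phi> y), snd (\<phi> x) + snd (\<phi> y))) \<and>
     (\<forall>x y. \<phi> (x * y) = (fst (\<phi> x) * fst (\<phi> y), snd (\<phi> x) * snd (\<phi> y))) \<and>
     (\<forall>a. \<phi> (\<iota> a) = (a, a)) \<and>
     (\<forall>x. \<phi> (\<sigma> x) = (snd (\<phi> x), fst (\<phi> x))))"

text \<open>Case 4: E the quaternion division algebra over F (central division algebra of
dimension 4), sigma its standard involution.\<close>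
definition case_quaternion :: "('f::field \<Rightarrow> 'e::ring_1) \<Rightarrow> ('e \<Rightarrow> 'e) \<Rightarrow> bool" where
  "case_quaternion \<iota> \<sigma> \<longleftrightarrow> (0::'e) \<noteq> 1 \<and>
     (\<forall>x::'e. x \<noteq> 0 \<longrightarrow> (\<exists>y. x * y = 1 \<and> y * x = 1)) \<and>
     {z::'e. \<forall>x. z * x = x * z} = range \<iota> \<and> F_dim \<iota> 4 \<and>
     ring_involution \<sigma> \<and> (\<forall>a. \<sigma> (\<iota> a) = \<iota> a) \<and>
     (\<forall>x. x + \<sigma> x \<in> range \<iota> \<and> x * \<sigma> x \<in> range \<iota>)"

definition herm_pair :: "('f::field \<Rightarrow> 'e::ring_1) \<Rightarrow> ('e \<Rightarrow> 'e) \<Rightarrow> bool" where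
  "herm_pair \<iota> \<sigma> \<longleftrightarrow> case_F \<iota> \<sigma> \<or> case_quadratic \<iota> \<sigma> \<or> case_split \<iota> \<sigma> \<or> case_quaternion \<iota> \<sigma>"

definition OF_order :: "('f::field \<Rightarrow> 'e::ring_1) \<Rightarrow> ('f \<Rightarrow> int) \<Rightarrow> 'e set \<Rightarrow> bool" where
  "OF_order \<iota> v Ord \<longleftrightarrow> 1 \<in> Ord \<and> (\<forall>x\<in>Ord. \<forall>y\<in>Ord. x + y \<in> Ord \<and> - x \<in> Ord \<and> x * y \<in> Ord) \<and>
     \<iota> ` OF v \<subseteq> Ord \<and>
     (\<exists>gs::'e list. Ord = {\<Sum>k<length gs. \<iota> (a k) * gs ! k | a. \<forall>k. a k \<in> OF v}) \<and>
     (\<forall>x. \<exists>a. a \<noteq> 0 \<and> \<iota> a * x \<in> Ord)"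

definition maximal_order :: "('f::field \<Rightarrow> 'e::ring_1) \<Rightarrow> ('f \<Rightarrow> int) \<Rightarrow> 'e set \<Rightarrow> bool" where
  "maximal_order \<iota> v Ord \<longleftrightarrow> OF_order \<iota> v Ord \<and> (\<forall>Ord'. OF_order \<iota> v Ord' \<and> Ord \<subseteq> Ord' \<longrightarrow> Ord' = Ord)"

definition nonunits :: "'e::ring_1 set \<Rightarrow> 'e set" where
  "nonunits Ord = {x\<in>Ord. \<not> (\<exists>y\<in>Ord. x * y = 1 \<and> y * x = 1)}"

definition E_uniformiser :: "'e::ring_1 set \<Rightarrow> 'e \<Rightarrow> bool" where
  "E_uniformiser Ord \<pi> \<longleftrightarrow> \<pi> \<in> Ord \<and> {\<pi> * y | y. y \<in> Ord} = nonunits Ord"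

definition ramified :: "('f::field \<Rightarrow> 'e::ring_1) \<Rightarrow> ('e \<Rightarrow> 'e) \<Rightarrow> 'e set \<Rightarrow> 'f \<Rightarrow> bool" where
  "ramified \<iota> \<sigma> Ord \<pi>F \<longleftrightarrow> case_quadratic \<iota> \<sigma> \<and> {\<iota> \<pi>F * y | y. y \<in> Ord} \<noteq> nonunits Ord"

definition left_module :: "('e::ring_1 \<Rightarrow> 'v::ab_group_add \<Rightarrow> 'v) \<Rightarrow> bool" where
  "left_module sm \<longleftrightarrow> (\<forall>a x y. sm a (x + y) = sm a x + sm a y) \<and>
     (\<forall>a b x. sm (a + b) x = sm a x + sm b x) \<and> (\<forall>a b x. sm (a * b) x = sm a (sm b x)) \<and>
     (\<forall>x. sm 1 x = x)"

definition herm_form :: "('e::ring_1 \<Rightarrow> 'v::ab_group_add \<Rightarrow> 'v) \<Rightarrow> ('e \<Rightarrow> 'e) \<Rightarrow> int \<Rightarrow> ('v \<Rightarrow> 'v \<Rightarrow> 'e) \<Rightarrow> bool" where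
  "herm_form sm \<sigma> \<epsilon> B \<longleftrightarrow> (\<forall>x y z. B (x + y) z = B x z + B y z) \<and>
     (\<forall>a x y. B (sm a x) y = a * B x y) \<and> (\<forall>x y. B y x = of_int \<epsilon> * \<sigma> (B x y))"

definition nondegenerate :: "('v::zero \<Rightarrow> 'v \<Rightarrow> 'e::zero) \<Rightarrow> bool" where
  "nondegenerate B \<longleftrightarrow> (\<forall>x. (\<forall>y. B x y = 0) \<longrightarrow> x = 0)"

definition fg_submodule :: "('e::ring_1 \<Rightarrow> 'v::ab_group_add \<Rightarrow> 'v) \<Rightarrow> 'e set \<Rightarrow> 'v set \<Rightarrow> bool" where
  "fg_submodule sm Ord M \<longleftrightarrow> 0 \<in> M \<and> (\<forall>x\<in>M. \<forall>y\<in>M. x + y \<in> M) \<and> (\<forall>a\<in>Ord. \<forall>x\<in>M. sm a x \<in> M) \<and>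
     (\<exists>gs::'v list. M = {\<Sum>k<length gs. sm (a k) (gs ! k) | a. \<forall>k. a k \<in> Ord})"

text \<open>M tensor F, realised inside V.\<close>
definition Fspan :: "('e::ring_1 \<Rightarrow> 'v::ab_group_add \<Rightarrow> 'v) \<Rightarrow> ('f::field \<Rightarrow> 'e) \<Rightarrow> 'f \<Rightarrow> 'v set \<Rightarrow> 'v set" where
  "Fspan sm \<iota> \<pi>F M = {v. \<exists>n::nat. sm (\<iota> (\<pi>F ^ n)) v \<in> M}"

text \<open>L is a finite rank O_E-lattice in V (= the whole type) with L tensor F = V and the
form O_E-valued on L.\<close>
definition herm_lattice where
  "herm_lattice sm \<iota> \<pi>F Ord B L \<longleftrightarrow> fg_submodule sm Ord L \<and> Fspan sm \<iota> \<pi>F L = UNIV \<and>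
     (\<forall>x\<in>L. \<forall>y\<in>L. B x y \<in> Ord)"

definition dual_in :: "('v \<Rightarrow> 'v \<Rightarrow> 'e) \<Rightarrow> 'e set \<Rightarrow> 'v set \<Rightarrow> 'v set \<Rightarrow> 'v set" where
  "dual_in B Ord W M = {x\<in>W. \<forall>y\<in>M. B x y \<in> Ord}"

text \<open>p_E^k M = varpi_E^k M for k an integer (for k < 0 as a preimage).\<close>
definition pE_pow :: "('e::ring_1 \<Rightarrow> 'v::ab_group_add \<Rightarrow> 'v) \<Rightarrow> 'e \<Rightarrow> int \<Rightarrow> 'v set \<Rightarrow> 'v set" where
  "pE_pow sm \<pi>E k M = (if 0 \<le> k then {sm (\<pi>E ^ nat k) m | m. m \<in> M}
                        else {v. sm (\<pi>E ^ nat (- k)) v \<in> M})"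

definition direct_decomp :: "'v::ab_group_add set \<Rightarrow> (nat \<Rightarrow> 'v set) \<Rightarrow> nat \<Rightarrow> bool" where
  "direct_decomp M Ms n \<longleftrightarrow> (\<forall>i\<le>n. Ms i \<subseteq> M) \<and>
     (\<forall>x\<in>M. \<exists>!c::nat \<Rightarrow> 'v. (\<forall>i\<le>n. c i \<in> Ms i) \<and> (\<forall>i>n. c i = 0) \<and> x = (\<Sum>i\<le>n. c i))"

definition orthogonal_family :: "('v \<Rightarrow> 'v \<Rightarrow> 'e::zero) \<Rightarrow> (nat \<Rightarrow> 'v set) \<Rightarrow> nat \<Rightarrow> bool" where
  "orthogonal_family B Ms n \<longleftrightarrow>
     (\<forall>i\<le>n. \<forall>j\<le>n. i \<noteq> j \<longrightarrow> (\<forall>x\<in>Ms i. \<forall>y\<in>Ms j. B x y = 0))"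

definition jordan_splitting where
  "jordan_splitting sm \<iota> \<pi>F Ord \<pi>E B L Ls N \<longleftrightarrow>
     (\<forall>i\<le>N. fg_submodule sm Ord (Ls i)) \<and> direct_decomp L Ls N \<and> orthogonal_family B Ls N \<and>
     (\<forall>i\<le>N. dual_in B Ord (Fspan sm \<iota> \<pi>F (Ls i)) (Ls i) = pE_pow sm \<pi>E (- int i) (Ls i))"

definition Lprime_parts :: "('e::ring_1 \<Rightarrow> 'v::ab_group_add \<Rightarrow> 'v) \<Rightarrow> 'e \<Rightarrow> (nat \<Rightarrow> 'v set) \<Rightarrow> nat \<Rightarrow> nat \<Rightarrow> 'v set" where
  "Lprime_parts sm \<pi>E Ls N i = (if i = N - 2
      then {a + b | a b. a \<in> Ls (N - 2) \<and> b \<in> pE_pow sm \<pi>E (-1) (Ls N)} else Ls i)"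

definition Lprime :: "('e::ring_1 \<Rightarrow> 'v::ab_group_add \<Rightarrow> 'v) \<Rightarrow> 'e \<Rightarrow> (nat \<Rightarrow> 'v set) \<Rightarrow> nat \<Rightarrow> 'v set" where
  "Lprime sm \<pi>E Ls N = {\<Sum>i<N. c i | c. \<forall>i<N. c i \<in> Lprime_parts sm \<pi>E Ls N i}"

text \<open>x^M_i: the i-th component of x in V = (+)_i (M_i tensor F).\<close>
definition component :: "('e::ring_1 \<Rightarrow> 'v::ab_group_add \<Rightarrow> 'v) \<Rightarrow> ('f::field \<Rightarrow> 'e) \<Rightarrow> 'f \<Rightarrow> (nat \<Rightarrow> 'v set) \<Rightarrow> nat \<Rightarrow> 'v \<Rightarrow> nat \<Rightarrow> 'v" where
  "component sm \<iota> \<pi>F Ms n x i = (THE c::nat \<Rightarrow> 'v. (\<forall>k\<le>n. c k \<in> Fspan sm \<iota> \<pi>F (Ms k)) \<and>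
      (\<forall>k>n. c k = 0) \<and> x = (\<Sum>k\<le>n. c k)) i"

definition isometry :: "('e::ring_1 \<Rightarrow> 'v::ab_group_add \<Rightarrow> 'v) \<Rightarrow> ('v \<Rightarrow> 'v \<Rightarrow> 'e) \<Rightarrow> ('v \<Rightarrow> 'v) \<Rightarrow> bool" where
  "isometry sm B g \<longleftrightarrow> bij g \<and> (\<forall>x y. g (x + y) = g x + g y) \<and> (\<forall>a x. g (sm a x) = sm a (g x)) \<and>
     (\<forall>x y. B (g x) (g y) = B x y)"

definition stabiliser :: "('e::ring_1 \<Rightarrow> 'v::ab_group_add \<Rightarrow> 'v) \<Rightarrow> ('v \<Rightarrow> 'v \<Rightarrow> 'e) \<Rightarrow> 'v set \<Rightarrow> ('v \<Rightarrow> 'v) set" where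
  "stabiliser sm B M = {g. isometry sm B g \<and> g ` M = M}"

end

theory Submission
  imports Defs
begin

definition vge :: "('f::field \<Rightarrow> int) \<Rightarrow> int \<Rightarrow> 'f \<Rightarrow> bool" where
  "vge v C a \<longleftrightarrow> a = 0 \<or> C \<le> v a"

lemma nlf_mult: "nonarch_local_field v p \<Longrightarrow> x \<noteq> 0 \<Longrightarrow> y \<noteq> 0 \<Longrightarrow> v (x * y) = v x + v y"
  unfolding nonarch_local_field_def by blast

lemma nlf_add: "nonarch_local_field v p \<Longrightarrow> x \<noteq> 0 \<Longrightarrow> y \<noteq> 0 \<Longrightarrow> x + y \<noteq> 0 \<Longrightarrow> min (v x) (v y) \<le> v (x + y)"
  unfolding nonarch_local_field_def by blast

lemma nlf_p: "nonarch_local_field v p \<Longrightarrow> p \<noteq> 0 \<and> v p = 1"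
  unfolding nonarch_local_field_def by blast

lemma nlf_one: assumes "nonarch_local_field v p" shows "v 1 = 0"
  using nlf_mult[OF assms, of 1 1] by simp

lemma nlf_power: assumes "nonarch_local_field v p" "x \<noteq> 0" shows "v (x ^ k) = int k * v x"
  by (induction k) (simp_all add: nlf_one[OF assms(1)] nlf_mult[OF assms(1)] assms(2) algebra_simps)

lemma nlf_inverse: assumes "nonarch_local_field v p" "x \<noteq> 0" shows "v (inverse x) = - v x"
  using nlf_mult[OF assms(1), of x "inverse x"] assms nlf_one[OF assms(1)] by simp

lemma nlf_uminus: assumes "nonarch_local_field v p" shows "v (- x) = v x"
proof (cases "x = 0")
  case False
  have "v ((-1) * (-1)) = v (-1) + v (-1)" using nlf_mult[OF assms, of "-1" "-1"] by simp
  then have "v (-1) = 0" using nlf_one[OF assms] by simp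
  then show ?thesis using nlf_mult[OF assms, of "-1" x] False by simp
qed simp

lemma vge_add: assumes "nonarch_local_field v p" "vge v C a" "vge v C b" shows "vge v C (a + b)"
proof (cases "a = 0 \<or> b = 0 \<or> a + b = 0")
  case True then show ?thesis using assms by (auto simp: vge_def)
next
  case False
  then have "min (v a) (v b) \<le> v (a + b)" using nlf_add[OF assms(1), of a b] by auto
  then show ?thesis using assms(2,3) False unfolding vge_def by auto
qed

lemma vge_mult: assumes "nonarch_local_field v p" "vge v C a" "vge v D b" shows "vge v (C + D) (a * b)"
proof (cases "a = 0 \<or> b = 0")
  case False then show ?thesis using assms nlf_mult[OF assms(1), of a b] unfolding vge_def by auto
qed (auto simp: vge_def)

lemma vge_uminus: assumes "nonarch_local_field v p" "vge v C a" shows "vge v C (- a)"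
  using assms nlf_uminus[OF assms(1), of a] unfolding vge_def by auto

lemma vge_mono: "vge v C a \<Longrightarrow> D \<le> C \<Longrightarrow> vge v D a"
  unfolding vge_def by auto

lemma vge_zero[simp]: "vge v C 0" unfolding vge_def by simp

lemma vge_sum: assumes "nonarch_local_field v p" "\<And>k. k \<in> A \<Longrightarrow> vge v C (f k)" shows "vge v C (sum f A)"
  using assms(2)
proof (induction A rule: infinite_finite_induct)
  case (insert x F) then show ?case using vge_add[OF assms(1)] by simp
qed simp_all

lemma OF_vge: "OF v = {a. vge v 0 a}" unfolding OF_def vge_def by auto

lemma vge_unbounded: assumes "nonarch_local_field v p" "\<forall>k::nat. vge v C (a ^ k)" shows "vge v 0 a"
proof (rule ccontr)
  assume "\<not> vge v 0 a"
  then have a: "a \<noteq> 0" "v a < 0" unfolding vge_def by auto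
  define k where "k = nat (\<bar>C\<bar> + 1)"
  have "vge v C (a ^ k)" using assms(2) by blast
  then have "C \<le> int k * v a" using a nlf_power[OF assms(1) a(1)] unfolding vge_def by auto
  moreover have "int k * v a \<le> int k * (-1)" using a(2) by (intro mult_left_mono) auto
  ultimately show False unfolding k_def by auto
qed


lemma Falg_add: "F_algebra \<iota> \<Longrightarrow> \<iota> (a + b) = \<iota> a + \<iota> b" unfolding F_algebra_def by blast
lemma Falg_mult: "F_algebra \<iota> \<Longrightarrow> \<iota> (a * b) = \<iota> a * \<iota> b" unfolding F_algebra_def by blast
lemma Falg_one: "F_algebra \<iota> \<Longrightarrow> \<iota> 1 = 1" unfolding F_algebra_def by blast
lemma Falg_comm: "F_algebra \<iota> \<Longrightarrow> \<iota> a * x = x * \<iota> a" unfolding F_algebra_def by blast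
lemma Falg_inj: "F_algebra \<iota> \<Longrightarrow> inj \<iota>" unfolding F_algebra_def by blast
lemma Falg_zero: "F_algebra \<iota> \<Longrightarrow> \<iota> 0 = 0"
  using Falg_add[of \<iota> 0 0] by simp
lemma Falg_uminus: "F_algebra \<iota> \<Longrightarrow> \<iota> (- a) = - \<iota> a"
  using Falg_add[of \<iota> a "-a"] Falg_zero[of \<iota>] minus_unique[of "\<iota> a" "\<iota> (-a)"] by simp
lemma Falg_diff: "F_algebra \<iota> \<Longrightarrow> \<iota> (a - b) = \<iota> a - \<iota> b"
  using Falg_add[of \<iota> a "-b"] Falg_uminus[of \<iota> b] by simp
lemma Falg_power: "F_algebra \<iota> \<Longrightarrow> \<iota> (a ^ k) = \<iota> a ^ k"
  by (induction k) (simp_all add: Falg_one Falg_mult)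
lemma Falg_sum: "F_algebra \<iota> \<Longrightarrow> \<iota> (sum f A) = (\<Sum>x\<in>A. \<iota> (f x))"
  by (induction A rule: infinite_finite_induct) (simp_all add: Falg_zero Falg_add)
lemma Falg_eq0: "F_algebra \<iota> \<Longrightarrow> \<iota> a = 0 \<longleftrightarrow> a = 0"
  using Falg_inj[of \<iota>] Falg_zero[of \<iota>] by (metis injD)
lemma Falg_inverse: "F_algebra \<iota> \<Longrightarrow> a \<noteq> 0 \<Longrightarrow> \<iota> a * \<iota> (inverse a) = 1 \<and> \<iota> (inverse a) * \<iota> a = 1"
  using Falg_mult[of \<iota> a "inverse a"] Falg_mult[of \<iota> "inverse a" a] Falg_one[of \<iota>] by simp

locale coords =
  fixes \<iota> :: "'f::field \<Rightarrow> 'e::ring_1" and d :: nat and b :: "nat \<Rightarrow> 'e" and crd :: "'e \<Rightarrow> nat \<Rightarrow> 'f"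
  assumes alg: "F_algebra \<iota>"
    and crd_repr: "\<And>x. x = (\<Sum>k<d. \<iota> (crd x k) * b k)"
    and crd_high: "\<And>x k. d \<le> k \<Longrightarrow> crd x k = 0"
    and crd_add: "\<And>x y k. crd (x + y) k = crd x k + crd y k"
    and crd_smult: "\<And>a x k. crd (\<iota> a * x) k = a * crd x k"
begin

lemma crd_zero: "crd 0 k = 0"
  using crd_smult[of 0 0 k] Falg_zero[OF alg] by simp

lemma crd_sum: "crd (sum f A) k = (\<Sum>x\<in>A. crd (f x) k)"
  by (induction A rule: infinite_finite_induct) (simp_all add: crd_zero crd_add)

lemma crd_one_nz: assumes "(0::'e) \<noteq> 1" shows "\<exists>l. crd 1 l \<noteq> 0"
proof (rule ccontr)
  assume "\<not> ?thesis"
  then have "(1::'e) = (\<Sum>k<d. \<iota> 0 * b k)" using crd_repr[of 1] by simp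
  then show False using assms by (simp add: Falg_zero[OF alg])
qed

end

lemma F_dim_coords: assumes alg: "F_algebra \<iota>" and fd: "F_dim \<iota> d"
  shows "\<exists>b crd. coords \<iota> d b crd"
proof -
  obtain b where b: "\<And>x. \<exists>!c. (\<forall>k\<ge>d. c k = 0) \<and> x = (\<Sum>k<d. \<iota> (c k) * b k)"
    using fd unfolding F_dim_def by blast
  define crd where "crd x = (THE c. (\<forall>k\<ge>d. c k = 0) \<and> x = (\<Sum>k<d. \<iota> (c k) * b k))" for x
  have crd: "(\<forall>k\<ge>d. crd x k = 0) \<and> x = (\<Sum>k<d. \<iota> (crd x k) * b k)" for x
    unfolding crd_def by (rule theI'[OF b])
  have uniq: "crd x = c" if "\<forall>k\<ge>d. c k = 0" "x = (\<Sum>k<d. \<iota> (c k) * b k)" for x c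
    using b[of x] crd[of x] that by blast
  show ?thesis
  proof (intro exI[of _ b] exI[of _ crd] coords.intro alg)
    show "x = (\<Sum>k<d. \<iota> (crd x k) * b k)" for x using crd by blast
    show "d \<le> k \<Longrightarrow> crd x k = 0" for x k using crd by blast
    show "crd (x + y) k = crd x k + crd y k" for x y k
    proof -
      have "crd (x + y) = (\<lambda>k. crd x k + crd y k)"
      proof (rule uniq)
        show "\<forall>k\<ge>d. crd x k + crd y k = 0" using crd by simp
        have "x + y = (\<Sum>k<d. \<iota> (crd x k) * b k) + (\<Sum>k<d. \<iota> (crd y k) * b k)" using crd by metis
        also have "\<dots> = (\<Sum>k<d. \<iota> (crd x k + crd y k) * b k)"
          by (simp add: sum.distrib[symmetric] Falg_add[OF alg] distrib_right)
        finally show "x + y = (\<Sum>k<d. \<iota> (crd x k + crd y k) * b k)" .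
      qed
      then show ?thesis by simp
    qed
    show "crd (\<iota> a * x) k = a * crd x k" for a x k
    proof -
      have "crd (\<iota> a * x) = (\<lambda>k. a * crd x k)"
      proof (rule uniq)
        show "\<forall>k\<ge>d. a * crd x k = 0" using crd by simp
        have "\<iota> a * x = \<iota> a * (\<Sum>k<d. \<iota> (crd x k) * b k)" using crd by metis
        also have "\<dots> = (\<Sum>k<d. \<iota> (a * crd x k) * b k)"
          by (simp add: sum_distrib_left Falg_mult[OF alg] mult.assoc)
        finally show "\<iota> a * x = (\<Sum>k<d. \<iota> (a * crd x k) * b k)" .
      qed
      then show ?thesis by simp
    qed
  qed
qed

lemma OF_order_gs: "OF_order \<iota> v Od \<Longrightarrow> \<exists>gs. Od = {\<Sum>k<length gs. \<iota> (a k) * gs ! k | a. \<forall>k. a k \<in> OF v}"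
  unfolding OF_order_def by (elim conjE) assumption
lemma OF_order_one: "OF_order \<iota> v Od \<Longrightarrow> 1 \<in> Od"
  unfolding OF_order_def by (elim conjE) assumption
lemma OF_order_add: "OF_order \<iota> v Od \<Longrightarrow> x \<in> Od \<Longrightarrow> y \<in> Od \<Longrightarrow> x + y \<in> Od"
  unfolding OF_order_def by blast
lemma OF_order_uminus: "OF_order \<iota> v Od \<Longrightarrow> x \<in> Od \<Longrightarrow> - x \<in> Od"
  unfolding OF_order_def by blast
lemma OF_order_mult: "OF_order \<iota> v Od \<Longrightarrow> x \<in> Od \<Longrightarrow> y \<in> Od \<Longrightarrow> x * y \<in> Od"
  unfolding OF_order_def by blast
lemma OF_order_OF: "OF_order \<iota> v Od \<Longrightarrow> a \<in> OF v \<Longrightarrow> \<iota> a \<in> Od"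
  unfolding OF_order_def by blast
lemma OF_order_denom: "OF_order \<iota> v Od \<Longrightarrow> \<exists>a. a \<noteq> 0 \<and> \<iota> a * x \<in> Od"
  unfolding OF_order_def by blast

lemma (in coords) OE_bounded:
  assumes F: "nonarch_local_field v p" and ord: "OF_order \<iota> v OE"
  shows "\<exists>C. \<forall>y\<in>OE. \<forall>k. vge v C (crd y k)"
proof -
  obtain gs where gs: "OE = {\<Sum>k<length gs. \<iota> (a k) * gs ! k | a. \<forall>k. a k \<in> OF v}"
    using OF_order_gs[OF ord] by blast
  define S where "S = (\<lambda>(m, k). v (crd (gs ! m) k)) ` ({..<length gs} \<times> {..<d})"
  define C where "C = Min (insert 0 S)"
  have finS: "finite S" unfolding S_def by simp
  have g: "vge v C (crd (gs ! m) k)" if "m < length gs" for m k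
  proof (cases "k < d")
    case True
    then have "(m, k) \<in> {..<length gs} \<times> {..<d}" using that by simp
    then have "v (crd (gs ! m) k) \<in> S" unfolding S_def by (rule rev_image_eqI) simp
    then have "C \<le> v (crd (gs ! m) k)" unfolding C_def using finS by simp
    then show ?thesis unfolding vge_def by simp
  qed (simp add: crd_high)
  have "vge v C (crd y k)" if y: "y \<in> OE" for y k
  proof -
    obtain a where a: "\<forall>k. a k \<in> OF v" "y = (\<Sum>m<length gs. \<iota> (a m) * gs ! m)"
      using y gs by blast
    have "crd y k = (\<Sum>m<length gs. a m * crd (gs ! m) k)"
      using a(2) by (simp add: crd_sum crd_smult)
    also have "vge v C \<dots>"
    proof (rule vge_sum[OF F])
      fix m assume "m \<in> {..<length gs}"
      moreover have "vge v 0 (a m)" using a(1) OF_vge[of v] by blast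
      ultimately have "vge v (0 + C) (a m * crd (gs ! m) k)"
        using vge_mult[OF F, of 0 "a m" C] g by simp
      then show "vge v C (a m * crd (gs ! m) k)" by simp
    qed
    finally show ?thesis .
  qed
  then show ?thesis by blast
qed


lemma vge_unbounded2: assumes F: "nonarch_local_field v p" and h: "\<forall>k::nat. vge v C (a ^ k * c)" and c: "c \<noteq> 0"
  shows "vge v 0 a"
proof (rule vge_unbounded[OF F, of "C + - v c"], intro allI)
  fix k
  have "vge v (- v c) (inverse c)" using nlf_inverse[OF F c] unfolding vge_def by simp
  then have "vge v (C + - v c) (a ^ k * c * inverse c)" using vge_mult[OF F] h by blast
  then show "vge v (C + - v c) (a ^ k)" using c by (simp add: mult.assoc)
qed

lemma OF_closed:
  assumes F: "nonarch_local_field v p"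
  shows "1 \<in> OF v" "a \<in> OF v \<Longrightarrow> b \<in> OF v \<Longrightarrow> a + b \<in> OF v"
    "a \<in> OF v \<Longrightarrow> - a \<in> OF v" "a \<in> OF v \<Longrightarrow> b \<in> OF v \<Longrightarrow> a - b \<in> OF v"
    "p \<in> OF v"
  using vge_add[OF F, of 0 a b] vge_uminus[OF F, of 0 a] vge_add[OF F, of 0 a "-b"] vge_uminus[OF F, of 0 b]
    nlf_one[OF F] nlf_p[OF F]
  unfolding OF_vge by (auto simp: vge_def)

lemma OF_order_power: "OF_order \<iota> v Od \<Longrightarrow> x \<in> Od \<Longrightarrow> x ^ k \<in> Od"
  by (induction k) (simp_all add: OF_order_one OF_order_mult)

lemma OF_order_diff: "OF_order \<iota> v Od \<Longrightarrow> x \<in> Od \<Longrightarrow> y \<in> Od \<Longrightarrow> x - y \<in> Od"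
  using OF_order_add[of \<iota> v Od x "-y"] OF_order_uminus[of \<iota> v Od y] by simp

lemma denom_pow:
  assumes F: "nonarch_local_field v p" and alg: "F_algebra \<iota>" and ord: "OF_order \<iota> v Od"
  shows "\<exists>m. \<iota> (p ^ m) * e \<in> Od"
proof -
  obtain a where a: "a \<noteq> 0" "\<iota> a * e \<in> Od" using OF_order_denom[OF ord] by blast
  define m where "m = nat (v a)"
  define c where "c = p ^ m * inverse a"
  have p: "p \<noteq> 0" "v p = 1" using nlf_p[OF F] by auto
  have "v c = int m + - v a" unfolding c_def
    using nlf_mult[OF F, of "p ^ m" "inverse a"] nlf_power[OF F p(1)] nlf_inverse[OF F a(1)] p a(1) by simp
  then have "c \<in> OF v" unfolding OF_def m_def by simp
  then have "\<iota> c * (\<iota> a * e) \<in> Od" using OF_order_mult[OF ord] OF_order_OF[OF ord] a(2) by blast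
  moreover have "\<iota> c * (\<iota> a * e) = \<iota> (p ^ m) * e"
    by (simp add: mult.assoc[symmetric] Falg_mult[OF alg, symmetric] c_def a(1)) (simp add: mult.assoc a(1))
  ultimately show ?thesis by auto
qed

lemma sigma_facts:
  fixes \<iota> :: "'f::field \<Rightarrow> 'e::ring_1" and \<sigma> :: "'e \<Rightarrow> 'e"
  assumes alg: "F_algebra \<iota>" and E: "herm_pair \<iota> \<sigma>"
  shows "ring_involution \<sigma> \<and> (\<forall>a. \<sigma> (\<iota> a) = \<iota> a)"
  using E unfolding herm_pair_def
proof (elim disjE)
  assume c: "case_F \<iota> \<sigma>"
  then have s: "\<sigma> = id" "surj \<iota>" unfolding case_F_def by auto
  have "x * y = y * x" for x y :: 'e
  proof -
    obtain a c where "x = \<iota> a" "y = \<iota> c" using s(2) by (metis surjD)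
    then show ?thesis by (simp add: Falg_mult[OF alg, symmetric] mult.commute)
  qed
  then show ?thesis using s unfolding ring_involution_def by simp
next
  assume "case_quadratic \<iota> \<sigma>" then show ?thesis unfolding case_quadratic_def by blast
next
  assume "case_quaternion \<iota> \<sigma>" then show ?thesis unfolding case_quaternion_def by blast
next
  assume "case_split \<iota> \<sigma>"
  then obtain \<phi> :: "'e \<Rightarrow> 'f \<times> 'f" where ph: "bij \<phi>"
    "\<And>x y. \<phi> (x + y) = (fst (\<phi> x) + fst (\<phi> y), snd (\<phi> x) + snd (\<phi> y))"
    "\<And>x y. \<phi> (x * y) = (fst (\<phi> x) * fst (\<phi> y), snd (\<phi> x) * snd (\<phi> y))"
    "\<And>a. \<phi> (\<iota> a) = (a, a)" "\<And>x. \<phi> (\<sigma> x) = (snd (\<phi> x), fst (\<phi> x))"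
    unfolding case_split_def by blast
  have inj: "\<phi> x = \<phi> y \<Longrightarrow> x = y" for x y using ph(1) by (metis bij_def injD)
  show ?thesis unfolding ring_involution_def
  proof (intro conjI allI)
    show "\<sigma> (x + y) = \<sigma> x + \<sigma> y" for x y by (rule inj) (simp add: ph)
    show "\<sigma> (x * y) = \<sigma> y * \<sigma> x" for x y by (rule inj) (simp add: ph mult.commute)
    show "\<sigma> 1 = 1" by (rule inj) (metis ph(4) ph(5) Falg_one[OF alg] fst_conv snd_conv)
    show "\<sigma> (\<sigma> x) = x" for x by (rule inj) (simp add: ph)
    show "\<sigma> (\<iota> a) = \<iota> a" for a by (rule inj) (simp add: ph)
  qed
qed

lemma ri_add: "ring_involution \<sigma> \<Longrightarrow> \<sigma> (x + y) = \<sigma> x + \<sigma> y" unfolding ring_involution_def by blast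
lemma ri_mult: "ring_involution \<sigma> \<Longrightarrow> \<sigma> (x * y) = \<sigma> y * \<sigma> x" unfolding ring_involution_def by blast
lemma ri_one: "ring_involution \<sigma> \<Longrightarrow> \<sigma> 1 = 1" unfolding ring_involution_def by blast
lemma ri_inv: "ring_involution \<sigma> \<Longrightarrow> \<sigma> (\<sigma> x) = x" unfolding ring_involution_def by blast
lemma ri_zero: "ring_involution \<sigma> \<Longrightarrow> \<sigma> 0 = 0" using ri_add[of \<sigma> 0 0] by simp
lemma ri_sum: "ring_involution \<sigma> \<Longrightarrow> \<sigma> (sum f A) = (\<Sum>x\<in>A. \<sigma> (f x))"
  by (induction A rule: infinite_finite_induct) (simp_all add: ri_zero ri_add)
lemma ri_uminus: "ring_involution \<sigma> \<Longrightarrow> \<sigma> (- x) = - \<sigma> x"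
  using ri_add[of \<sigma> x "-x"] ri_zero[of \<sigma>] minus_unique[of "\<sigma> x" "\<sigma> (-x)"] by simp
lemma ri_power: "ring_involution \<sigma> \<Longrightarrow> \<sigma> (x ^ k) = \<sigma> x ^ k"
  by (induction k) (simp_all add: ri_one ri_mult power_commutes)


lemma central_power_prod:
  fixes y w :: "'e::ring_1"
  assumes c: "\<And>x. (y * w) * x = x * (y * w)"
  shows "y ^ k * w ^ k = (y * w) ^ k"
proof (induction k)
  case (Suc k)
  have cz: "(y * w) ^ k * x = x * (y * w) ^ k" for x
  proof (induction k)
    case (Suc k)
    have "(y * w) ^ Suc k * x = (y * w) * ((y * w) ^ k * x)" by (simp add: mult.assoc)
    also have "\<dots> = (y * w) * x * (y * w) ^ k" using Suc by (simp add: mult.assoc)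
    also have "\<dots> = x * (y * w) * (y * w) ^ k" using c[of x] by simp
    finally show ?case by (simp add: mult.assoc)
  qed simp
  have "y ^ Suc k * w ^ Suc k = y * (y ^ k * w ^ k) * w" by (metis power_Suc power_Suc2 mult.assoc)
  also have "\<dots> = y * ((y * w) ^ k) * w" using Suc by simp
  also have "\<dots> = ((y * w) ^ k * y) * w" using cz[of y] by simp
  also have "\<dots> = (y * w) ^ k * (y * w)" by (simp add: mult.assoc)
  finally show ?case by (metis power_Suc2)
qed simp

lemma (in coords) sigma_OE:
  assumes F: "nonarch_local_field v p" and ord: "OF_order \<iota> v OE" and ri: "ring_involution \<sigma>"
    and sfix: "\<forall>a. \<sigma> (\<iota> a) = \<iota> a" and nz: "(0::'e) \<noteq> 1" and N: "\<forall>y. y * \<sigma> y \<in> range \<iota>"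
    and y: "y \<in> OE"
  shows "\<sigma> y \<in> OE"
proof -
  define nrm where "nrm y = (THE a. \<iota> a = y * \<sigma> y)" for y
  have nrm: "\<iota> (nrm y) = y * \<sigma> y" for y
  proof -
    obtain a where a: "\<iota> a = y * \<sigma> y" using N by (metis rangeE)
    have inj: "\<iota> x = \<iota> x' \<Longrightarrow> x = x'" for x x' using Falg_inj[OF alg] by (simp add: inj_eq)
    have "\<iota> (THE a. \<iota> a = y * \<sigma> y) = y * \<sigma> y"
    proof (rule theI[of _ a])
      show "\<iota> a = y * \<sigma> y" by (rule a)
    next
      fix x assume "\<iota> x = y * \<sigma> y"
      then show "x = a" using a inj by simp
    qed
    then show ?thesis unfolding nrm_def .
  qed
  obtain C where C: "\<And>y k. y \<in> OE \<Longrightarrow> vge v C (crd y k)" using OE_bounded[OF F ord] by blast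
  obtain l0 where l0: "crd 1 l0 \<noteq> 0" using crd_one_nz[OF nz] by blast
  define K where "K = Min (insert 0 ((\<lambda>(l, m). v (crd (b l * \<sigma> (b m)) l0)) ` ({..<d} \<times> {..<d})))"
  have Kb: "vge v K (crd (b l * \<sigma> (b m)) l0)" if "l < d" "m < d" for l m
  proof -
    have "(l, m) \<in> {..<d} \<times> {..<d}" using that by simp
    then have "v (crd (b l * \<sigma> (b m)) l0) \<in> ((\<lambda>(l, m). v (crd (b l * \<sigma> (b m)) l0)) ` ({..<d} \<times> {..<d}))"
      by (rule rev_image_eqI) simp
    then have "K \<le> v (crd (b l * \<sigma> (b m)) l0)" unfolding K_def by simp
    then show ?thesis unfolding vge_def by simp
  qed
  have trm: "\<iota> a * x * (z * \<iota> c) = \<iota> (a * c) * (x * z)" for a c x z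
  proof -
    have "\<iota> a * x * (z * \<iota> c) = \<iota> a * x * (\<iota> c * z)" using Falg_comm[OF alg, of c z] by simp
    also have "\<dots> = \<iota> a * (x * \<iota> c) * z" by (simp add: mult.assoc)
    also have "\<dots> = \<iota> a * (\<iota> c * x) * z" using Falg_comm[OF alg, of c x] by simp
    also have "\<dots> = \<iota> (a * c) * (x * z)" by (simp add: mult.assoc Falg_mult[OF alg])
    finally show ?thesis .
  qed
  have exp: "x * \<sigma> x = (\<Sum>l<d. \<Sum>m<d. \<iota> (crd x l * crd x m) * (b l * \<sigma> (b m)))" for x
  proof -
    have "x * \<sigma> x = (\<Sum>l<d. \<iota> (crd x l) * b l) * \<sigma> (\<Sum>m<d. \<iota> (crd x m) * b m)"
      using crd_repr[of x] by simp
    also have "\<dots> = (\<Sum>l<d. \<iota> (crd x l) * b l) * (\<Sum>m<d. \<sigma> (b m) * \<iota> (crd x m))"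
      by (simp add: ri_sum[OF ri] ri_mult[OF ri] sfix)
    also have "\<dots> = (\<Sum>l<d. \<Sum>m<d. \<iota> (crd x l) * b l * (\<sigma> (b m) * \<iota> (crd x m)))"
      by (simp add: sum_distrib_left sum_distrib_right) (rule sum.swap)
    also have "\<dots> = (\<Sum>l<d. \<Sum>m<d. \<iota> (crd x l * crd x m) * (b l * \<sigma> (b m)))"
      by (simp add: trm)
    finally show ?thesis .
  qed
  have crdn: "nrm x * crd 1 l0 = (\<Sum>l<d. \<Sum>m<d. crd x l * crd x m * crd (b l * \<sigma> (b m)) l0)" for x
  proof -
    have "nrm x * crd 1 l0 = crd (\<iota> (nrm x) * 1) l0" by (simp only: crd_smult)
    also have "\<dots> = crd (x * \<sigma> x) l0" using nrm by simp
    also have "\<dots> = (\<Sum>l<d. \<Sum>m<d. crd x l * crd x m * crd (b l * \<sigma> (b m)) l0)"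
      by (subst exp) (simp add: crd_sum crd_smult)
    finally show ?thesis .
  qed
  define C' where "C' = C + C + K + - v (crd 1 l0)"
  have bound: "vge v C' (nrm x)" if x: "x \<in> OE" for x
  proof -
    have "vge v (C + C + K) (\<Sum>l<d. \<Sum>m<d. crd x l * crd x m * crd (b l * \<sigma> (b m)) l0)"
      by (intro vge_sum[OF F] vge_mult[OF F] C x Kb) auto
    moreover have "vge v (- v (crd 1 l0)) (inverse (crd 1 l0))"
      using nlf_inverse[OF F l0] unfolding vge_def by simp
    ultimately have "vge v C' ((\<Sum>l<d. \<Sum>m<d. crd x l * crd x m * crd (b l * \<sigma> (b m)) l0) * inverse (crd 1 l0))"
      unfolding C'_def by (rule vge_mult[OF F])
    moreover have "nrm x = (\<Sum>l<d. \<Sum>m<d. crd x l * crd x m * crd (b l * \<sigma> (b m)) l0) * inverse (crd 1 l0)"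
      using crdn[of x] l0 by (simp add: field_simps)
    ultimately show ?thesis by simp
  qed
  have npow: "nrm (x ^ k) = nrm x ^ k" for x k
  proof -
    have "\<iota> (nrm (x ^ k)) = x ^ k * \<sigma> x ^ k" using nrm[of "x ^ k"] by (simp add: ri_power[OF ri])
    also have "\<dots> = (x * \<sigma> x) ^ k"
      by (rule central_power_prod) (metis nrm Falg_comm[OF alg])
    also have "\<dots> = \<iota> (nrm x ^ k)" by (simp add: nrm Falg_power[OF alg])
    finally show ?thesis using Falg_inj[OF alg] by (auto dest: injD)
  qed
  have nOF: "nrm x \<in> OF v" if x: "x \<in> OE" for x
  proof -
    have "\<forall>k. vge v C' (nrm x ^ k * 1)"
    proof
      fix k
      have "vge v C' (nrm (x ^ k))" by (rule bound[OF OF_order_power[OF ord x]])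
      then show "vge v C' (nrm x ^ k * 1)" using npow by simp
    qed
    then show ?thesis using vge_unbounded2[OF F, of C' "nrm x" 1] OF_vge by auto
  qed
  have one: "1 \<in> OE" using OF_order_one[OF ord] .
  have y1: "1 + y \<in> OE" using OF_order_add[OF ord one y] .
  define t where "t = nrm (1 + y) - 1 - nrm y"
  have tOF: "t \<in> OF v" unfolding t_def by (intro OF_closed(4)[OF F] OF_closed(1)[OF F] nOF y1 y)
  have "\<iota> t = (1 + y) * \<sigma> (1 + y) - 1 - y * \<sigma> y"
    unfolding t_def by (simp add: Falg_diff[OF alg] Falg_one[OF alg] nrm)
  also have "\<dots> = y + \<sigma> y" by (simp add: ri_add[OF ri] ri_one[OF ri] algebra_simps)
  finally have "\<sigma> y = \<iota> t - y" by (simp add: algebra_simps)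
  then show ?thesis using OF_order_diff[OF ord OF_order_OF[OF ord tOF] y] by simp
qed


lemma (in coords) crd_ext: assumes "\<And>k. crd x k = crd y k" shows "x = y"
  using crd_repr[of x] crd_repr[of y] assms by simp

lemma (in coords) unif_nonzero:
  assumes F: "nonarch_local_field v pF" and ord: "OF_order \<iota> v OE" and nz: "(0::'e) \<noteq> 1"
    and U: "E_uniformiser OE pE"
  shows "pE \<noteq> 0"
proof
  assume p0: "pE = 0"
  have NU: "nonunits OE = {0}" using U p0 OF_order_one[OF ord] unfolding E_uniformiser_def by auto
  have pF: "pF \<noteq> 0" "v pF = 1" using nlf_p[OF F] by auto
  have iOE: "\<iota> pF \<in> OE" using OF_order_OF[OF ord OF_closed(5)[OF F]] .
  have "\<iota> pF \<noteq> 0" using pF Falg_eq0[OF alg] by simp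
  then have "\<iota> pF \<notin> nonunits OE" using NU by simp
  then obtain u where u: "u \<in> OE" "\<iota> pF * u = 1" "u * \<iota> pF = 1"
    using iOE unfolding nonunits_def by blast
  have "u = \<iota> (inverse pF) * (\<iota> pF * u)" using Falg_inverse[OF alg pF(1)] by (simp add: mult.assoc[symmetric])
  then have ueq: "u = \<iota> (inverse pF)" using u by simp
  obtain C where C: "\<And>y k. y \<in> OE \<Longrightarrow> vge v C (crd y k)" using OE_bounded[OF F ord] by blast
  obtain l0 where l0: "crd 1 l0 \<noteq> 0" using crd_one_nz[OF nz] by blast
  have "\<forall>k. vge v C (inverse pF ^ k * crd 1 l0)"
  proof
    fix k
    have "u ^ k \<in> OE" using OF_order_power[OF ord u(1)] .
    then have "vge v C (crd (\<iota> (inverse pF ^ k) * 1) l0)" using C ueq by (simp add: Falg_power[OF alg])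
    then show "vge v C (inverse pF ^ k * crd 1 l0)" by (simp only: crd_smult)
  qed
  then have "vge v 0 (inverse pF)" using vge_unbounded2[OF F _ l0] by blast
  then show False using nlf_inverse[OF F pF(1)] pF unfolding vge_def by simp
qed

lemma (in coords) quad_fix:
  assumes d2: "d = 2" and comm: "\<And>x y::'e. x * y = y * x" and ri: "ring_involution \<sigma>"
    and sfix: "\<forall>a. \<sigma> (\<iota> a) = \<iota> a" and nid: "\<sigma> \<noteq> id" and nz: "(0::'e) \<noteq> 1" and z: "\<sigma> z = z"
  shows "z \<in> range \<iota>"
proof (rule ccontr)
  assume zn: "z \<notin> range \<iota>"
  define a0 a1 c0 c1 where "a0 = crd 1 0" "a1 = crd 1 1" "c0 = crd z 0" "c1 = crd z 1"
  define D where "D = a0 * c1 - a1 * c0"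
  have hi: "crd x k = 0" if "k \<noteq> 0" "k \<noteq> 1" for x k using crd_high[of k x] that d2 by simp
  have k01: "k = 0 \<or> k = 1 \<or> (k \<noteq> 0 \<and> k \<noteq> 1)" for k :: nat by auto
  have cs: "crd (\<iota> r * 1) k = r * crd 1 k" for r k by (simp only: crd_smult)
  have D: "D \<noteq> 0"
  proof
    assume D0: "D = 0"
    have "\<exists>r. z = \<iota> r * 1"
    proof (cases "a0 = 0")
      case False
      show ?thesis
      proof (intro exI crd_ext)
        fix k
        show "crd z k = crd (\<iota> (c0 / a0) * 1) k"
          using k01[of k] hi[of k z] hi[of k 1] False D0
          unfolding cs a0_a1_c0_c1_def[symmetric] D_def
          by (auto simp: a0_a1_c0_c1_def field_simps)
      qed
    next
      case True
      have a1: "a1 \<noteq> 0"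
      proof
        assume "a1 = 0"
        then have "crd 1 k = 0" for k using True hi[of k 1] k01[of k] unfolding a0_a1_c0_c1_def by auto
        then show False using crd_one_nz[OF nz] by blast
      qed
      then have c0: "c0 = 0" using D0 True unfolding D_def by simp
      show ?thesis
      proof (intro exI crd_ext)
        fix k
        show "crd z k = crd (\<iota> (c1 / a1) * 1) k"
          using k01[of k] hi[of k z] hi[of k 1] True a1 c0
          unfolding cs by (auto simp: a0_a1_c0_c1_def field_simps)
      qed
    qed
    then show False using zn by auto
  qed
  have "\<sigma> x = x" for x
  proof -
    define p q where "p = (crd x 0 * c1 - crd x 1 * c0) / D" "q = (a0 * crd x 1 - a1 * crd x 0) / D"
    have e0: "p * a0 + q * c0 = crd x 0"
    proof -
      have "p * a0 + q * c0 = ((crd x 0 * c1 - crd x 1 * c0) * a0 + (a0 * crd x 1 - a1 * crd x 0) * c0) / D"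
        unfolding p_q_def by (simp add: add_divide_distrib)
      also have "\<dots> = crd x 0 * D / D" by (simp add: D_def algebra_simps)
      finally show ?thesis using D by simp
    qed
    have e1: "p * a1 + q * c1 = crd x 1"
    proof -
      have "p * a1 + q * c1 = ((crd x 0 * c1 - crd x 1 * c0) * a1 + (a0 * crd x 1 - a1 * crd x 0) * c1) / D"
        unfolding p_q_def by (simp add: add_divide_distrib)
      also have "\<dots> = crd x 1 * D / D" by (simp add: D_def algebra_simps)
      finally show ?thesis using D by simp
    qed
    have xe: "x = \<iota> p * 1 + \<iota> q * z"
    proof (rule crd_ext)
      fix k
      have "crd (\<iota> p * 1 + \<iota> q * z) k = p * crd 1 k + q * crd z k" by (simp only: crd_add crd_smult)
      then show "crd x k = crd (\<iota> p * 1 + \<iota> q * z) k"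
        using k01[of k] hi[of k z] hi[of k 1] hi[of k x] e0 e1
        unfolding a0_a1_c0_c1_def by auto
    qed
    have "\<sigma> x = \<sigma> (\<iota> p * 1) + \<sigma> (\<iota> q * z)" using xe ri_add[OF ri] by metis
    also have "\<dots> = \<iota> p * 1 + \<iota> q * z" using ri_mult[OF ri] sfix z ri_one[OF ri] comm by metis
    finally show ?thesis using xe by simp
  qed
  then show False using nid by auto
qed

lemma unif_case:
  fixes \<iota> :: "'f::field \<Rightarrow> 'e::ring_1"
  assumes F: "nonarch_local_field v pF" and co: "coords \<iota> d b crd" and ord: "OF_order \<iota> v OE"
    and ri: "ring_involution \<sigma>" and sfix: "\<forall>a. \<sigma> (\<iota> a) = \<iota> a" and nz: "(0::'e) \<noteq> 1"
    and N: "\<forall>y. y * \<sigma> y \<in> range \<iota>" and DIV: "\<And>x::'e. x \<noteq> 0 \<Longrightarrow> \<exists>y. x * y = 1 \<and> y * x = 1"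
    and U: "E_uniformiser OE pE"
  shows "\<exists>pEi. pE * pEi = 1 \<and> pEi * pE = 1 \<and> pE \<in> OE \<and> (\<forall>s\<in>OE. \<exists>y\<in>OE. pE * s = y * \<sigma> pE)
           \<and> (\<forall>y\<in>OE. \<exists>s\<in>OE. y * \<sigma> pE = pE * s)"
proof -
  have alg: "F_algebra \<iota>" using co unfolding coords_def by blast
  have "pE \<noteq> 0" using coords.unif_nonzero[OF co F ord nz U] .
  then obtain pEi where pi: "pE * pEi = 1" "pEi * pE = 1" using DIV by meson
  have sOE: "\<sigma> y \<in> OE" if "y \<in> OE" for y using coords.sigma_OE[OF co F ord ri sfix nz N that] .
  have pOE: "pE \<in> OE" using U unfolding E_uniformiser_def by blast
  have NU: "nonunits OE = {pE * y | y. y \<in> OE}" using U unfolding E_uniformiser_def by blast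
  have one: "1 \<in> OE" using OF_order_one[OF ord] .
  have L1: "pE * s \<in> nonunits OE" if s: "s \<in> OE" for s
  proof -
    have "pE * s \<in> OE" using OF_order_mult[OF ord pOE s] .
    moreover have "\<not> (\<exists>u\<in>OE. pE * s * u = 1 \<and> u * (pE * s) = 1)"
    proof
      assume "\<exists>u\<in>OE. pE * s * u = 1 \<and> u * (pE * s) = 1"
      then obtain u where u: "u \<in> OE" "pE * s * u = 1" by blast
      have "pEi = pEi * (pE * s * u)" using u by simp
      also have "\<dots> = s * u" using pi by (simp add: mult.assoc[symmetric])
      finally have e: "pEi = s * u" .
      have "pEi \<in> OE" using e OF_order_mult[OF ord s u(1)] by simp
      moreover have "pE \<in> nonunits OE" using NU one by force
      ultimately show False using pi unfolding nonunits_def by blast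
    qed
    ultimately show ?thesis unfolding nonunits_def by blast
  qed
  have L2: "\<sigma> x \<in> nonunits OE" if x: "x \<in> nonunits OE" for x
  proof -
    have xo: "x \<in> OE" using x unfolding nonunits_def by blast
    have "\<not> (\<exists>u\<in>OE. \<sigma> x * u = 1 \<and> u * \<sigma> x = 1)"
    proof
      assume "\<exists>u\<in>OE. \<sigma> x * u = 1 \<and> u * \<sigma> x = 1"
      then obtain u where u: "u \<in> OE" "\<sigma> x * u = 1" "u * \<sigma> x = 1" by blast
      have "x * \<sigma> u = 1" using arg_cong[OF u(3), of \<sigma>] by (simp add: ri_mult[OF ri] ri_inv[OF ri] ri_one[OF ri])
      moreover have "\<sigma> u * x = 1" using arg_cong[OF u(2), of \<sigma>] by (simp add: ri_mult[OF ri] ri_inv[OF ri] ri_one[OF ri])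
      ultimately show False using x sOE[OF u(1)] unfolding nonunits_def by blast
    qed
    then show ?thesis using sOE[OF xo] unfolding nonunits_def by blast
  qed
  have K1: "\<exists>y\<in>OE. pE * s = y * \<sigma> pE" if s: "s \<in> OE" for s
  proof -
    have "\<sigma> (pE * s) \<in> nonunits OE" using L2[OF L1[OF s]] .
    then obtain t where t: "t \<in> OE" "\<sigma> (pE * s) = pE * t" using NU by blast
    have "pE * s = \<sigma> (\<sigma> (pE * s))" using ri_inv[OF ri] by simp
    also have "\<dots> = \<sigma> t * \<sigma> pE" using t(2) ri_mult[OF ri] by simp
    finally show ?thesis using sOE[OF t(1)] by blast
  qed
  have K2: "\<exists>s\<in>OE. y * \<sigma> pE = pE * s" if y: "y \<in> OE" for y
  proof -
    have "\<sigma> (pE * \<sigma> y) \<in> nonunits OE" using L2[OF L1[OF sOE[OF y]]] .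
    moreover have "\<sigma> (pE * \<sigma> y) = y * \<sigma> pE" using ri_mult[OF ri] ri_inv[OF ri] by simp
    ultimately show ?thesis using NU by auto
  qed
  show ?thesis using pi pOE K1 K2 by blast
qed


lemma E_facts:
  fixes vF :: "'f::field \<Rightarrow> int" and \<iota> :: "'f \<Rightarrow> 'e::ring_1"
  assumes F: "nonarch_local_field vF \<pi>F" and alg: "F_algebra \<iota>" and Esig: "herm_pair \<iota> \<sigma>"
    and OE: "maximal_order \<iota> vF OE"
    and unif: "if ramified \<iota> \<sigma> OE \<pi>F \<or> case_quaternion \<iota> \<sigma> then E_uniformiser OE \<pi>E else \<pi>E = \<iota> \<pi>F"
  shows "\<exists>pEi. \<pi>E * pEi = 1 \<and> pEi * \<pi>E = 1 \<and> \<pi>E \<in> OE \<and> (\<forall>s\<in>OE. \<exists>y\<in>OE. \<pi>E * s = y * \<sigma> \<pi>E)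
           \<and> (\<forall>y\<in>OE. \<exists>s\<in>OE. y * \<sigma> \<pi>E = \<pi>E * s)"
proof -
  have ord: "OF_order \<iota> vF OE" using OE unfolding maximal_order_def by blast
  have sf: "ring_involution \<sigma>" "\<forall>a. \<sigma> (\<iota> a) = \<iota> a" using sigma_facts[OF alg Esig] by auto
  show ?thesis
  proof (cases "ramified \<iota> \<sigma> OE \<pi>F \<or> case_quaternion \<iota> \<sigma>")
    case True
    then have U: "E_uniformiser OE \<pi>E" using unif by simp
    show ?thesis using True
    proof
      assume "ramified \<iota> \<sigma> OE \<pi>F"
      then have q: "case_quadratic \<iota> \<sigma>" unfolding ramified_def by blast
      then have q1: "(0::'e) \<noteq> 1" "\<And>x y::'e. x * y = y * x" "\<And>x::'e. x \<noteq> 0 \<Longrightarrow> \<exists>y. x * y = 1"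
        "F_dim \<iota> 2" "\<sigma> \<noteq> id"
        unfolding case_quadratic_def by blast+
      obtain b crd where co: "coords \<iota> 2 b crd" using F_dim_coords[OF alg q1(4)] by blast
      have N: "\<forall>y. y * \<sigma> y \<in> range \<iota>"
      proof
        fix y
        have "\<sigma> (y * \<sigma> y) = y * \<sigma> y" using ri_mult[OF sf(1)] ri_inv[OF sf(1)] by simp
        then show "y * \<sigma> y \<in> range \<iota>" using coords.quad_fix[OF co refl q1(2) sf(1) sf(2) q1(5) q1(1)] by blast
      qed
      have DIV: "\<exists>y. x * y = 1 \<and> y * x = 1" if "x \<noteq> 0" for x :: 'e using q1(3)[OF that] q1(2) by metis
      show ?thesis by (rule unif_case[OF F co ord sf(1) sf(2) q1(1) N DIV U])
    next
      assume q: "case_quaternion \<iota> \<sigma>"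
      then have q1: "(0::'e) \<noteq> 1" "\<And>x::'e. x \<noteq> 0 \<Longrightarrow> \<exists>y. x * y = 1 \<and> y * x = 1"
        "F_dim \<iota> 4" "\<forall>y. y * \<sigma> y \<in> range \<iota>"
        unfolding case_quaternion_def by blast+
      obtain b crd where co: "coords \<iota> 4 b crd" using F_dim_coords[OF alg q1(3)] by blast
      show ?thesis by (rule unif_case[OF F co ord sf(1) sf(2) q1(1) q1(4) q1(2) U])
    qed
  next
    case False
    then have pE: "\<pi>E = \<iota> \<pi>F" using unif by simp
    have pF: "\<pi>F \<noteq> 0" using nlf_p[OF F] by auto
    have "\<pi>E \<in> OE" using pE OF_order_OF[OF ord OF_closed(5)[OF F]] by simp
    moreover have "\<sigma> \<pi>E = \<pi>E" using pE sf(2) by simp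
    ultimately show ?thesis using pE Falg_inverse[OF alg pF] Falg_comm[OF alg] by metis
  qed
qed


lemma lm_add: "left_module sm \<Longrightarrow> sm a (x + y) = sm a x + sm a y" unfolding left_module_def by blast
lemma lm_adds: "left_module sm \<Longrightarrow> sm (a + b) x = sm a x + sm b x" unfolding left_module_def by blast
lemma lm_mult: "left_module sm \<Longrightarrow> sm (a * b) x = sm a (sm b x)" unfolding left_module_def by blast
lemma lm_one: "left_module sm \<Longrightarrow> sm 1 x = x" unfolding left_module_def by blast
lemma lm_zero: "left_module sm \<Longrightarrow> sm a 0 = 0" using lm_add[of sm a 0 0] by simp
lemma lm_zeros: "left_module sm \<Longrightarrow> sm 0 x = 0" using lm_adds[of sm 0 0 x] by simp

lemma hf_add: "herm_form sm \<sigma> \<epsilon> B \<Longrightarrow> B (x + y) z = B x z + B y z" unfolding herm_form_def by blast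
lemma hf_smult: "herm_form sm \<sigma> \<epsilon> B \<Longrightarrow> B (sm a x) y = a * B x y" unfolding herm_form_def by blast
lemma hf_sym: "herm_form sm \<sigma> \<epsilon> B \<Longrightarrow> B y x = of_int \<epsilon> * \<sigma> (B x y)" unfolding herm_form_def by blast

locale setting =
  fixes sm :: "'e::ring_1 \<Rightarrow> 'v::ab_group_add \<Rightarrow> 'v" and \<iota> :: "'f::field \<Rightarrow> 'e" and pF :: 'f
    and OE :: "'e set" and pE pEi :: 'e and \<sigma> :: "'e \<Rightarrow> 'e" and \<epsilon> :: int and B :: "'v \<Rightarrow> 'v \<Rightarrow> 'e"
    and vF :: "'f \<Rightarrow> int"
  assumes alg: "F_algebra \<iota>" and V: "left_module sm" and form: "herm_form sm \<sigma> \<epsilon> B"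
    and nd: "nondegenerate B" and ri: "ring_involution \<sigma>" and sfix: "\<And>a. \<sigma> (\<iota> a) = \<iota> a"
    and pi1: "pE * pEi = 1" and pi2: "pEi * pE = 1" and pOE: "pE \<in> OE"
    and K1: "\<And>s. s \<in> OE \<Longrightarrow> \<exists>y\<in>OE. pE * s = y * \<sigma> pE"
    and K2: "\<And>y. y \<in> OE \<Longrightarrow> \<exists>s\<in>OE. y * \<sigma> pE = pE * s"
    and H7: "\<And>e. \<exists>m. \<iota> (pF ^ m) * e \<in> OE"
    and ord: "OF_order \<iota> vF OE" and pF: "pF \<noteq> 0"
begin

abbreviation Fsp where "Fsp M \<equiv> Fspan sm \<iota> pF M"

lemma smz: "sm a 0 = 0" by (rule lm_zero[OF V])
lemma sm_add: "sm a (x + y) = sm a x + sm a y" by (rule lm_add[OF V])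
lemma sm_mult: "sm (a * b) x = sm a (sm b x)" by (rule lm_mult[OF V])
lemma sm_one: "sm 1 x = x" by (rule lm_one[OF V])

lemma B_add: "B (x + y) z = B x z + B y z" by (rule hf_add[OF form])
lemma B_smult: "B (sm a x) y = a * B x y" by (rule hf_smult[OF form])
lemma B_zero: "B 0 y = 0" using B_add[of 0 0 y] by simp
lemma B_uminus: "B (- x) y = - B x y" using B_add[of x "-x" y] B_zero minus_unique[of "B x y"] by simp
lemma B_diff: "B (x - x') y = B x y - B x' y" using B_add[of x "-x'" y] B_uminus by simp
lemma B_sum: "B (sum f A) y = (\<Sum>i\<in>A. B (f i) y)"
  by (induction A rule: infinite_finite_induct) (simp_all add: B_zero B_add)
lemma B_add2: "B x (y + z) = B x y + B x z"
proof -
  have "B x (y + z) = of_int \<epsilon> * \<sigma> (B (y + z) x)" by (rule hf_sym[OF form])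
  also have "\<dots> = of_int \<epsilon> * \<sigma> (B y x) + of_int \<epsilon> * \<sigma> (B z x)"
    by (simp add: B_add ri_add[OF ri] distrib_left)
  also have "\<dots> = B x y + B x z" using hf_sym[OF form, of x y] hf_sym[OF form, of x z] by simp
  finally show ?thesis .
qed
lemma B_smult2: "B x (sm a y) = B x y * \<sigma> a"
proof -
  have "B x (sm a y) = of_int \<epsilon> * \<sigma> (B (sm a y) x)" by (rule hf_sym[OF form])
  also have "\<dots> = (of_int \<epsilon> * \<sigma> (B y x)) * \<sigma> a" by (simp add: B_smult ri_mult[OF ri] mult.assoc)
  also have "\<dots> = B x y * \<sigma> a" using hf_sym[OF form, of x y] by simp
  finally show ?thesis .
qed
lemma B_zero2: "B x 0 = 0" using B_add2[of x 0 0] by simp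
lemma B_sum2: "B x (sum f A) = (\<Sum>i\<in>A. B x (f i))"
  by (induction A rule: infinite_finite_induct) (simp_all add: B_zero2 B_add2)

lemma iota_pow_inv: "\<iota> (pF ^ m) * \<iota> (inverse pF ^ m) = 1" "\<iota> (inverse pF ^ m) * \<iota> (pF ^ m) = 1"
  using Falg_inverse[OF alg, of "pF ^ m"] pF by (simp_all add: power_inverse)

lemma sm_cancel_iota: "sm (\<iota> (pF ^ m)) x = sm (\<iota> (pF ^ m)) y \<Longrightarrow> x = y"
  by (metis iota_pow_inv(2) sm_mult sm_one)

lemma B_cancel2: "B x (sm (\<iota> (pF ^ m)) y) = B x' (sm (\<iota> (pF ^ m)) y) \<Longrightarrow> B x y = B x' y"
  using B_smult2 sfix iota_pow_inv(1) by (metis mult.assoc mult_1_right)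

lemma B_cancel1: "\<iota> (pF ^ m) * u = 0 \<Longrightarrow> u = 0"
  by (metis iota_pow_inv(2) mult.assoc mult_1_left mult_zero_right)

lemma pEi_cancel: "pE * u = 0 \<Longrightarrow> u = 0"
  by (metis pi2 mult.assoc mult_1_left mult_zero_right)

lemma spE_cancel: "u * \<sigma> pE = 0 \<Longrightarrow> u = 0"
proof -
  assume "u * \<sigma> pE = 0"
  moreover have "\<sigma> pE * \<sigma> pEi = 1" using arg_cong[OF pi2, of \<sigma>] ri_mult[OF ri] ri_one[OF ri] by simp
  ultimately show "u = 0" by (metis mult.assoc mult_1_right mult_zero_left)
qed

lemma sub_Fsp: "M \<subseteq> Fsp M"
  unfolding Fspan_def using sm_one Falg_one[OF alg] by (auto intro!: exI[of _ 0])

lemma Fsp_scal: assumes "\<And>e c. e \<in> OE \<Longrightarrow> c \<in> M \<Longrightarrow> sm e c \<in> M" "c \<in> M" shows "sm e c \<in> Fsp M"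
proof -
  obtain m where "\<iota> (pF ^ m) * e \<in> OE" using H7 by blast
  then have "sm (\<iota> (pF ^ m)) (sm e c) \<in> M" using assms sm_mult by metis
  then show ?thesis unfolding Fspan_def by blast
qed

end


lemma sum_single: assumes "finite A" "k \<in> A" "\<And>l. l \<in> A \<Longrightarrow> l \<noteq> k \<Longrightarrow> f l = 0" shows "sum f A = f k"
proof -
  have "sum f A = f k + sum f (A - {k})" using sum.remove[OF assms(1,2)] .
  also have "sum f (A - {k}) = 0" using assms(3) by (intro sum.neutral) auto
  finally show ?thesis by simp
qed

context setting begin

lemma pow_inv: "pEi ^ k * pE ^ k = 1" "pE ^ k * pEi ^ k = 1"
proof -
  show "pEi ^ k * pE ^ k = 1"
  proof (induction k)
    case (Suc k)
    have "pEi ^ Suc k * pE ^ Suc k = pEi ^ k * (pEi * pE) * pE ^ k" by (simp only: power_Suc2[of pEi] power_Suc[of pE] mult.assoc)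
    then show ?case using Suc pi2 by simp
  qed simp
  show "pE ^ k * pEi ^ k = 1"
  proof (induction k)
    case (Suc k)
    have "pE ^ Suc k * pEi ^ Suc k = pE ^ k * (pE * pEi) * pEi ^ k" by (simp only: power_Suc2[of pE] power_Suc[of pEi] mult.assoc)
    then show ?case using Suc pi1 by simp
  qed simp
qed

lemma comp_unique:
  fixes n :: nat and Ms :: "nat \<Rightarrow> 'v set"
  assumes A4': "\<forall>y. \<exists>m. sm (\<iota> (pF ^ m)) y \<in> M"
    and A3': "\<forall>m\<in>M. \<exists>c. (\<forall>k\<le>n. c k \<in> Ms k) \<and> m = (\<Sum>k\<le>n. c k)"
    and A5': "\<forall>k l z y. k \<le> n \<longrightarrow> l \<le> n \<longrightarrow> k \<noteq> l \<longrightarrow> z \<in> Fsp (Ms k) \<longrightarrow> y \<in> Ms l \<longrightarrow> B z y = 0"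
    and P: "(\<forall>k\<le>n. c k \<in> Fsp (Ms k)) \<and> (\<forall>k>n. c k = 0) \<and> z = (\<Sum>k\<le>n. c k)"
    and P': "(\<forall>k\<le>n. c' k \<in> Fsp (Ms k)) \<and> (\<forall>k>n. c' k = 0) \<and> z = (\<Sum>k\<le>n. c' k)"
  shows "c = c'"
proof -
  have A4: "\<exists>m. sm (\<iota> (pF ^ m)) y \<in> M" for y using A4' by blast
  have A3: "\<exists>c. (\<forall>k\<le>n. c k \<in> Ms k) \<and> m = (\<Sum>k\<le>n. c k)" if "m \<in> M" for m using A3' that by blast
  have A5: "B z y = 0" if "k \<le> n" "l \<le> n" "k \<noteq> l" "z \<in> Fsp (Ms k)" "y \<in> Ms l" for k l z y
    using A5' that by blast
  have key: "B (d k) (\<Sum>l\<le>n. yl l) = B z (yl k)"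
    if d: "\<forall>k\<le>n. d k \<in> Fsp (Ms k)" "z = (\<Sum>k\<le>n. d k)" and k: "k \<le> n" and yl: "\<forall>l\<le>n. yl l \<in> Ms l" for d k yl
  proof -
    have "B (d k) (\<Sum>l\<le>n. yl l) = (\<Sum>l\<le>n. B (d k) (yl l))" by (rule B_sum2)
    also have "\<dots> = B (d k) (yl k)"
      by (rule sum_single) (use k d yl A5 in auto)
    also have "\<dots> = (\<Sum>l\<le>n. B (d l) (yl k))"
      by (rule sum_single[symmetric]) (use k d yl A5 in auto)
    also have "\<dots> = B z (yl k)" using d(2) by (simp add: B_sum)
    finally show ?thesis .
  qed
  show ?thesis
  proof
    fix k
    show "c k = c' k"
    proof (cases "k \<le> n")
      case False then show ?thesis using P P' by auto
    next
      case True
      have "\<forall>y. B (c k - c' k) y = 0"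
      proof
        fix y
        obtain m where m: "sm (\<iota> (pF ^ m)) y \<in> M" using A4 by blast
        obtain yl where yl: "\<forall>l\<le>n. yl l \<in> Ms l" "sm (\<iota> (pF ^ m)) y = (\<Sum>l\<le>n. yl l)"
          using A3[OF m] by blast
        have "B (c k) (sm (\<iota> (pF ^ m)) y) = B (c' k) (sm (\<iota> (pF ^ m)) y)"
          unfolding yl(2) using key[of c k yl] key[of c' k yl] P P' True yl(1) by simp
        then have "B (c k) y = B (c' k) y" by (rule B_cancel2)
        then show "B (c k - c' k) y = 0" by (simp add: B_diff)
      qed
      then have "c k - c' k = 0" using nd unfolding nondegenerate_def by blast
      then show ?thesis by simp
    qed
  qed
qed

lemma main_abstract:
  fixes n :: nat and Ms :: "nat \<Rightarrow> 'v set"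
  assumes A1: "\<And>k c e. k \<le> n \<Longrightarrow> c \<in> Ms k \<Longrightarrow> sm e c \<in> Fsp (Ms k)"
    and A2: "\<And>k. k \<le> n \<Longrightarrow> Ms k \<subseteq> M"
    and A3: "\<And>m. m \<in> M \<Longrightarrow> \<exists>c. (\<forall>k\<le>n. c k \<in> Ms k) \<and> m = (\<Sum>k\<le>n. c k)"
    and A4: "\<And>y. \<exists>m. sm (\<iota> (pF ^ m)) y \<in> M"
    and A5: "\<And>k l z y. k \<le> n \<Longrightarrow> l \<le> n \<Longrightarrow> k \<noteq> l \<Longrightarrow> z \<in> Fsp (Ms k) \<Longrightarrow> y \<in> Ms l \<Longrightarrow> B z y = 0"
    and A6: "\<And>k z. k \<le> n \<Longrightarrow> z \<in> Fsp (Ms k) \<Longrightarrow> (\<forall>y\<in>Ms k. B z y \<in> OE) \<Longrightarrow> sm (pE ^ k) z \<in> Ms k"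
    and A7: "\<And>k x y. k \<le> n \<Longrightarrow> x \<in> Ms k \<Longrightarrow> y \<in> Ms k \<Longrightarrow> \<exists>e\<in>OE. B x y = pE ^ k * e"
    and g: "g \<in> stabiliser sm B M" and ij: "i \<le> j" "j \<le> n" and x: "x \<in> Ms j"
  shows "component sm \<iota> pF Ms n (g x) i \<in> pE_pow sm pE (int j - int i) (Ms i)"
proof -
  have giso: "\<And>a b. B (g a) (g b) = B a b" and gM: "g ` M = M"
    using g unfolding stabiliser_def isometry_def by auto
  have xM: "x \<in> M" using A2[OF ij(2)] x by blast
  then have gxM: "g x \<in> M" using gM by blast
  obtain c where c: "\<forall>k\<le>n. c k \<in> Ms k" "g x = (\<Sum>k\<le>n. c k)" using A3[OF gxM] by blast
  define c0 where "c0 k = (if k \<le> n then c k else 0)" for k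
  have P0: "(\<forall>k\<le>n. c0 k \<in> Fsp (Ms k)) \<and> (\<forall>k>n. c0 k = 0) \<and> g x = (\<Sum>k\<le>n. c0 k)"
    using c sub_Fsp unfolding c0_def by auto
  have "(THE c'. (\<forall>k\<le>n. c' k \<in> Fsp (Ms k)) \<and> (\<forall>k>n. c' k = 0) \<and> g x = (\<Sum>k\<le>n. c' k)) = c0"
  proof (rule the_equality)
    show "(\<forall>k\<le>n. c0 k \<in> Fsp (Ms k)) \<and> (\<forall>k>n. c0 k = 0) \<and> g x = (\<Sum>k\<le>n. c0 k)" by (rule P0)
  next
    fix c' assume "(\<forall>k\<le>n. c' k \<in> Fsp (Ms k)) \<and> (\<forall>k>n. c' k = 0) \<and> g x = (\<Sum>k\<le>n. c' k)"
    moreover have "\<forall>y. \<exists>m. sm (\<iota> (pF ^ m)) y \<in> M" using A4 by blast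
    moreover have "\<forall>m\<in>M. \<exists>c. (\<forall>k\<le>n. c k \<in> Ms k) \<and> m = (\<Sum>k\<le>n. c k)" using A3 by blast
    moreover have "\<forall>k l z y. k \<le> n \<longrightarrow> l \<le> n \<longrightarrow> k \<noteq> l \<longrightarrow> z \<in> Fsp (Ms k) \<longrightarrow> y \<in> Ms l \<longrightarrow> B z y = 0"
      using A5 by blast
    ultimately show "c' = c0" using comp_unique[of M n Ms c' "g x" c0] P0 by blast
  qed
  then have comp: "component sm \<iota> pF Ms n (g x) i = c i"
    unfolding component_def c0_def using ij by simp
  have in_n: "i \<le> n" using ij by simp
  define w where "w = sm (pEi ^ j) (c i)"
  have wF: "w \<in> Fsp (Ms i)" unfolding w_def using A1 in_n c(1) by blast
  have "B w y \<in> OE" if y: "y \<in> Ms i" for y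
  proof -
    have "B (g x) y = (\<Sum>k\<le>n. B (c k) y)" unfolding c(2) by (rule B_sum)
    also have "\<dots> = B (c i) y"
    proof (rule sum_single)
      fix l assume l: "l \<in> {..n}" "l \<noteq> i"
      then have "c l \<in> Fsp (Ms l)" using c(1) sub_Fsp by blast
      then show "B (c l) y = 0" using A5[of l i "c l" y] l in_n y by simp
    qed (use in_n in auto)
    finally have e1: "B (c i) y = B (g x) y" by simp
    have "y \<in> M" using A2[OF in_n] y by blast
    then obtain u where u: "u \<in> M" "y = g u" using gM by blast
    obtain d where d: "\<forall>k\<le>n. d k \<in> Ms k" "u = (\<Sum>k\<le>n. d k)" using A3[OF u(1)] by blast
    have "B x u = (\<Sum>k\<le>n. B x (d k))" unfolding d(2) by (rule B_sum2)
    also have "\<dots> = B x (d j)"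
    proof (rule sum_single)
      fix l assume l: "l \<in> {..n}" "l \<noteq> j"
      have "x \<in> Fsp (Ms j)" using x sub_Fsp by blast
      then show "B x (d l) = 0" using A5[of j l x "d l"] l ij d(1) by simp
    qed (use ij in auto)
    finally have e2: "B x u = B x (d j)" .
    obtain e where e: "e \<in> OE" "B x (d j) = pE ^ j * e" using A7[OF ij(2) x] d(1) ij by blast
    have "B w y = pEi ^ j * B (c i) y" unfolding w_def by (rule B_smult)
    also have "\<dots> = pEi ^ j * (pE ^ j * e)" using e1 u(2) giso e2 e(2) by simp
    also have "\<dots> = e" using pow_inv(1) by (simp add: mult.assoc[symmetric])
    finally show ?thesis using e(1) by simp
  qed
  then have wi: "sm (pE ^ i) w \<in> Ms i" using A6[OF in_n wF] by blast
  have "c i = sm (pE ^ j) w" unfolding w_def by (simp add: sm_mult[symmetric] pow_inv(2) sm_one)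
  also have "\<dots> = sm (pE ^ (j - i)) (sm (pE ^ i) w)"
    using ij by (simp add: sm_mult[symmetric] power_add[symmetric])
  finally have "c i = sm (pE ^ nat (int j - int i)) (sm (pE ^ i) w)" using ij by (simp add: nat_diff_distrib)
  then show ?thesis unfolding comp pE_pow_def using ij wi by auto
qed

end


lemma pE_pow_neg: "pE_pow sm pE (- int k) M = {v. sm (pE ^ k) v \<in> M}" if "left_module sm"
proof (cases "k = 0")
  case True then show ?thesis using lm_one[OF that] by (auto simp: pE_pow_def)
next
  case False then have "\<not> 0 \<le> - int k" by simp
  then show ?thesis unfolding pE_pow_def by simp
qed

locale jsetting = setting +
  fixes L and Ls and N :: nat
  assumes J: "jordan_splitting sm \<iota> pF OE pE B L Ls N"
    and Lspan: "Fspan sm \<iota> pF L = UNIV"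
    and iOE: "\<And>m. \<iota> (pF ^ m) \<in> OE"
begin

lemma Fsp_iff: "z \<in> Fsp M \<longleftrightarrow> (\<exists>m. sm (\<iota> (pF ^ m)) z \<in> M)" unfolding Fspan_def by simp

lemma J1: "k \<le> N \<Longrightarrow> fg_submodule sm OE (Ls k)" using J unfolding jordan_splitting_def by blast
lemma Ls0: "k \<le> N \<Longrightarrow> 0 \<in> Ls k" using J1 unfolding fg_submodule_def by blast
lemma Lsadd: "k \<le> N \<Longrightarrow> x \<in> Ls k \<Longrightarrow> y \<in> Ls k \<Longrightarrow> x + y \<in> Ls k" using J1 unfolding fg_submodule_def by blast
lemma Lssc: "k \<le> N \<Longrightarrow> e \<in> OE \<Longrightarrow> x \<in> Ls k \<Longrightarrow> sm e x \<in> Ls k" using J1 unfolding fg_submodule_def by blast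
lemma DD: "direct_decomp L Ls N" using J unfolding jordan_splitting_def by blast
lemma Ls_sub: "k \<le> N \<Longrightarrow> Ls k \<subseteq> L" using DD unfolding direct_decomp_def by blast
lemma L_dec: "m \<in> L \<Longrightarrow> \<exists>c. (\<forall>k\<le>N. c k \<in> Ls k) \<and> m = (\<Sum>k\<le>N. c k)"
  using DD unfolding direct_decomp_def by blast
lemma orth: "k \<le> N \<Longrightarrow> l \<le> N \<Longrightarrow> k \<noteq> l \<Longrightarrow> x \<in> Ls k \<Longrightarrow> y \<in> Ls l \<Longrightarrow> B x y = 0"
  using J unfolding jordan_splitting_def orthogonal_family_def by blast
lemma dualeq: "k \<le> N \<Longrightarrow> dual_in B OE (Fsp (Ls k)) (Ls k) = {v. sm (pE ^ k) v \<in> Ls k}"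
  using J pE_pow_neg[OF V] unfolding jordan_splitting_def by blast

lemma Ld: "k \<le> N \<Longrightarrow> (z \<in> Fsp (Ls k) \<and> (\<forall>y\<in>Ls k. B z y \<in> OE)) \<longleftrightarrow> sm (pE ^ k) z \<in> Ls k"
  using dualeq[of k] unfolding dual_in_def by blast

lemma LA1: "k \<le> N \<Longrightarrow> c \<in> Ls k \<Longrightarrow> sm e c \<in> Fsp (Ls k)"
  by (rule Fsp_scal) (auto intro: Lssc)

lemma B_cancel_r: "u * \<iota> (pF ^ m) = 0 \<Longrightarrow> u = 0"
  by (metis iota_pow_inv(1) mult.assoc mult_1_right mult_zero_left)

lemma LA5: "k \<le> N \<Longrightarrow> l \<le> N \<Longrightarrow> k \<noteq> l \<Longrightarrow> z \<in> Fsp (Ls k) \<Longrightarrow> y \<in> Ls l \<Longrightarrow> B z y = 0"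
proof -
  assume a: "k \<le> N" "l \<le> N" "k \<noteq> l" "z \<in> Fsp (Ls k)" "y \<in> Ls l"
  then obtain m where "sm (\<iota> (pF ^ m)) z \<in> Ls k" unfolding Fsp_iff by blast
  then have "B (sm (\<iota> (pF ^ m)) z) y = 0" using orth a by blast
  then have "\<iota> (pF ^ m) * B z y = 0" by (simp add: B_smult)
  then show "B z y = 0" by (rule B_cancel1)
qed

lemma LA5b: "k \<le> N \<Longrightarrow> l \<le> N \<Longrightarrow> k \<noteq> l \<Longrightarrow> z \<in> Fsp (Ls k) \<Longrightarrow> y \<in> Fsp (Ls l) \<Longrightarrow> B z y = 0"
proof -
  assume a: "k \<le> N" "l \<le> N" "k \<noteq> l" "z \<in> Fsp (Ls k)" "y \<in> Fsp (Ls l)"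
  then obtain m where "sm (\<iota> (pF ^ m)) y \<in> Ls l" unfolding Fsp_iff by blast
  then have "B z (sm (\<iota> (pF ^ m)) y) = 0" using LA5 a by blast
  then have "B z y * \<iota> (pF ^ m) = 0" by (simp add: B_smult2 sfix)
  then show "B z y = 0" by (rule B_cancel_r)
qed

lemma LA7: "k \<le> N \<Longrightarrow> x \<in> Ls k \<Longrightarrow> y \<in> Ls k \<Longrightarrow> \<exists>e\<in>OE. B x y = pE ^ k * e"
proof -
  assume a: "k \<le> N" "x \<in> Ls k" "y \<in> Ls k"
  define w where "w = sm (pEi ^ k) x"
  have "sm (pE ^ k) w = x" unfolding w_def by (simp add: sm_mult[symmetric] pow_inv sm_one)
  then have "B w y \<in> OE" using Ld[OF a(1), of w] a by auto
  moreover have "B x y = pE ^ k * B w y"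
    using \<open>sm (pE ^ k) w = x\<close> B_smult by metis
  ultimately show ?thesis by blast
qed

lemma LA4: "\<exists>m. sm (\<iota> (pF ^ m)) y \<in> L" using Lspan unfolding Fspan_def by blast

lemma case_L:
  assumes g: "g \<in> stabiliser sm B L" and ij: "i \<le> j" "j \<le> N" and x: "x \<in> Ls j"
  shows "component sm \<iota> pF Ls N (g x) i \<in> pE_pow sm pE (int j - int i) (Ls i)"
proof -
  have A1: "\<And>k c e. k \<le> N \<Longrightarrow> c \<in> Ls k \<Longrightarrow> sm e c \<in> Fsp (Ls k)" by (rule LA1)
  have A2: "\<And>k. k \<le> N \<Longrightarrow> Ls k \<subseteq> L" by (rule Ls_sub)
  have A3: "\<And>m. m \<in> L \<Longrightarrow> \<exists>c. (\<forall>k\<le>N. c k \<in> Ls k) \<and> m = (\<Sum>k\<le>N. c k)" by (rule L_dec)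
  have A4: "\<And>y. \<exists>m. sm (\<iota> (pF ^ m)) y \<in> L" by (rule LA4)
  have A5: "\<And>k l z y. k \<le> N \<Longrightarrow> l \<le> N \<Longrightarrow> k \<noteq> l \<Longrightarrow> z \<in> Fsp (Ls k) \<Longrightarrow> y \<in> Ls l \<Longrightarrow> B z y = 0"
    by (rule LA5)
  have A6: "\<And>k z. k \<le> N \<Longrightarrow> z \<in> Fsp (Ls k) \<Longrightarrow> \<forall>y\<in>Ls k. B z y \<in> OE \<Longrightarrow> sm (pE ^ k) z \<in> Ls k"
    using Ld by blast
  have A7: "\<And>k x y. k \<le> N \<Longrightarrow> x \<in> Ls k \<Longrightarrow> y \<in> Ls k \<Longrightarrow> \<exists>e\<in>OE. B x y = pE ^ k * e" by (rule LA7)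
  show ?thesis by (rule main_abstract[where M=L and Ms=Ls and n=N, OF A1 A2 A3 A4 A5 A6 A7 g ij x])
qed

end


locale jsetting2 = jsetting +
  assumes N2: "2 \<le> N"
begin

abbreviation P where "P \<equiv> {v. sm pE v \<in> Ls N}"
abbreviation parts where "parts \<equiv> Lprime_parts sm pE Ls N"

lemma Pdef: "pE_pow sm pE (-1) (Ls N) = P"
  using pE_pow_neg[OF V, of pE 1 "Ls N"] by simp

lemma parts_N2: "parts (N - 2) = {a + b | a b. a \<in> Ls (N - 2) \<and> b \<in> P}"
  unfolding Lprime_parts_def Pdef by simp
lemma parts_other: "k \<noteq> N - 2 \<Longrightarrow> parts k = Ls k"
  unfolding Lprime_parts_def by simp

lemma P0: "0 \<in> P" using smz Ls0[of N] by simp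
lemma P_Fsp: "b \<in> P \<Longrightarrow> b \<in> Fsp (Ls N)"
proof -
  assume b: "b \<in> P"
  have "sm pEi (sm pE b) \<in> Fsp (Ls N)" using LA1[of N "sm pE b" pEi] b by simp
  then show ?thesis by (simp add: sm_mult[symmetric] pi2 sm_one)
qed

lemma Ba_b: "k \<le> N \<Longrightarrow> k \<noteq> N \<Longrightarrow> a \<in> Fsp (Ls k) \<Longrightarrow> b \<in> P \<Longrightarrow> B a b = 0"
proof -
  assume a: "k \<le> N" "k \<noteq> N" "a \<in> Fsp (Ls k)" "b \<in> P"
  then have "B a (sm pE b) = 0" using LA5[of k N a "sm pE b"] by simp
  then have "B a b * \<sigma> pE = 0" by (simp add: B_smult2)
  then show ?thesis by (rule spE_cancel)
qed

lemma Bb_a: "l \<le> N \<Longrightarrow> l \<noteq> N \<Longrightarrow> b \<in> P \<Longrightarrow> y \<in> Ls l \<Longrightarrow> B b y = 0"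
proof -
  assume a: "l \<le> N" "l \<noteq> N" "b \<in> P" "y \<in> Ls l"
  then have "B (sm pE b) y = 0" using orth[of N l "sm pE b" y] by simp
  then have "pE * B b y = 0" by (simp add: B_smult)
  then show ?thesis by (rule pEi_cancel)
qed

lemma iota_pow_add: "\<iota> (pF ^ (m1 + m2)) = \<iota> (pF ^ m2) * \<iota> (pF ^ m1)"
  by (simp add: power_add Falg_mult[OF alg, symmetric] mult.commute)

lemma PA1: "k \<le> N - 1 \<Longrightarrow> c \<in> parts k \<Longrightarrow> sm e c \<in> Fsp (parts k)"
proof (cases "k = N - 2")
  case False
  assume "k \<le> N - 1" "c \<in> parts k"
  then show ?thesis using LA1[of k c e] parts_other[OF False] by simp
next
  case True
  assume "k \<le> N - 1" "c \<in> parts k"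
  then obtain a b where ab: "c = a + b" "a \<in> Ls (N - 2)" "b \<in> P" using True parts_N2 by auto
  obtain m1 where m1: "\<iota> (pF ^ m1) * e \<in> OE" using H7 by blast
  obtain m2 where m2: "\<iota> (pF ^ m2) * (pE * e * pEi) \<in> OE" using H7 by blast
  define X where "X = \<iota> (pF ^ (m1 + m2)) * e"
  define Y where "Y = \<iota> (pF ^ (m1 + m2)) * (pE * e * pEi)"
  have X: "X \<in> OE" unfolding X_def iota_pow_add mult.assoc using OF_order_mult[OF ord iOE m1] .
  have Y: "Y \<in> OE" unfolding Y_def iota_pow_add using OF_order_mult[OF ord iOE m2]
    by (metis Falg_comm[OF alg] mult.assoc)
  have cm: "pE * \<iota> (pF ^ (m1 + m2)) = \<iota> (pF ^ (m1 + m2)) * pE" using Falg_comm[OF alg] by metis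
  have "pE * X = \<iota> (pF ^ (m1 + m2)) * (pE * e)" unfolding X_def
    by (simp add: mult.assoc[symmetric] cm)
  moreover have "Y * pE = \<iota> (pF ^ (m1 + m2)) * (pE * e)" unfolding Y_def
    by (simp add: mult.assoc pi2)
  ultimately have pX: "pE * X = Y * pE" by simp
  have "sm (\<iota> (pF ^ (m1 + m2))) (sm e c) = sm X a + sm X b"
    unfolding X_def ab(1) by (simp add: sm_mult sm_add)
  moreover have "sm X a \<in> Ls (N - 2)" using Lssc[OF _ X ab(2)] by simp
  moreover have "sm X b \<in> P"
  proof -
    have "sm pE (sm X b) = sm Y (sm pE b)" by (simp add: sm_mult[symmetric] pX)
    then show ?thesis using Lssc[OF _ Y, of N "sm pE b"] ab(3) by simp
  qed
  ultimately have "sm (\<iota> (pF ^ (m1 + m2))) (sm e c) \<in> parts k" using True parts_N2 by blast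
  then show ?thesis unfolding Fsp_iff by blast
qed

lemma parts0: "0 \<in> parts k" if "k < N"
proof (cases "k = N - 2")
  case True
  have "0 \<in> Ls (N - 2)" by (rule Ls0) simp
  then have "0 + 0 \<in> {a + b | a b. a \<in> Ls (N - 2) \<and> b \<in> P}" using P0 by blast
  then show ?thesis using True parts_N2 by simp
next
  case False then show ?thesis using parts_other Ls0 that by simp
qed

lemma PA2: "k \<le> N - 1 \<Longrightarrow> parts k \<subseteq> Lprime sm pE Ls N"
proof
  fix x assume k: "k \<le> N - 1" and x: "x \<in> parts k"
  define c where "c i = (if i = k then x else 0)" for i
  have kN: "k < N" using k N2 by arith
  have "\<forall>i<N. c i \<in> parts i" using x parts0 unfolding c_def by auto
  moreover have "x = (\<Sum>i<N. c i)" unfolding c_def using kN by simp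
  ultimately show "x \<in> Lprime sm pE Ls N" unfolding Lprime_def by blast
qed

lemma atMost_N1: "{..N - 1} = {..<N}" using N2 by auto

lemma PA3: "m \<in> Lprime sm pE Ls N \<Longrightarrow> \<exists>c. (\<forall>k\<le>N - 1. c k \<in> parts k) \<and> m = (\<Sum>k\<le>N - 1. c k)"
proof -
  assume "m \<in> Lprime sm pE Ls N"
  then obtain c where c: "\<forall>i<N. c i \<in> parts i" "m = (\<Sum>i<N. c i)" unfolding Lprime_def by blast
  have "\<forall>k\<le>N - 1. c k \<in> parts k"
  proof (intro allI impI)
    fix k assume "k \<le> N - 1" then have "k < N" using N2 by arith
    then show "c k \<in> parts k" using c(1) by blast
  qed
  then show ?thesis using c(2) unfolding atMost_N1 by blast
qed

lemma PA4: "\<exists>m. sm (\<iota> (pF ^ m)) y \<in> Lprime sm pE Ls N"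
proof -
  obtain m where m: "sm (\<iota> (pF ^ m)) y \<in> L" using LA4 by blast
  then obtain yl where yl: "\<forall>k\<le>N. yl k \<in> Ls k" "sm (\<iota> (pF ^ m)) y = (\<Sum>k\<le>N. yl k)" using L_dec by blast
  define c where "c i = (if i = N - 2 then yl i + yl N else yl i)" for i
  have "\<forall>i<N. c i \<in> parts i"
  proof (intro allI impI)
    fix i assume i: "i < N"
    show "c i \<in> parts i"
    proof (cases "i = N - 2")
      case True
      have "yl N \<in> P" using Lssc[OF _ pOE, of N "yl N"] yl(1) by simp
      moreover have "yl (N - 2) \<in> Ls (N - 2)" using yl(1) by simp
      ultimately have "yl (N - 2) + yl N \<in> parts (N - 2)" using parts_N2 by blast
      then show ?thesis using True unfolding c_def by simp
    next
      case False then show ?thesis using parts_other yl(1) i unfolding c_def by simp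
    qed
  qed
  moreover have "(\<Sum>i<N. c i) = (\<Sum>k\<le>N. yl k)"
  proof -
    have "(\<Sum>i<N. c i) = (\<Sum>i<N. yl i + (if i = N - 2 then yl N else 0))"
      unfolding c_def by (intro sum.cong) auto
    also have "\<dots> = (\<Sum>i<N. yl i) + yl N" using N2 by (simp add: sum.distrib)
    also have "\<dots> = (\<Sum>k\<le>N. yl k)" by (simp add: lessThan_Suc_atMost[symmetric])
    finally show ?thesis .
  qed
  ultimately have "\<forall>i<N. c i \<in> parts i" "sm (\<iota> (pF ^ m)) y = (\<Sum>i<N. c i)" using yl(2) by auto
  then have "sm (\<iota> (pF ^ m)) y \<in> Lprime sm pE Ls N" unfolding Lprime_def by blast
  then show ?thesis by blast
qed

end


context jsetting2 begin

lemma Nform: "N = Suc (Suc (N - 2))" using N2 by arith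

lemma pw: "pE ^ N = pE * pE ^ (N - 2) * pE"
proof -
  have "pE ^ Suc (Suc (N - 2)) = pE * pE ^ (N - 2) * pE" by (metis power_Suc power_Suc2 mult.assoc)
  then show ?thesis using Nform by metis
qed

lemma LA1F: "k \<le> N \<Longrightarrow> w \<in> Fsp (Ls k) \<Longrightarrow> sm e w \<in> Fsp (Ls k)"
proof -
  assume k: "k \<le> N" and w: "w \<in> Fsp (Ls k)"
  then obtain m where m: "sm (\<iota> (pF ^ m)) w \<in> Ls k" unfolding Fsp_iff by blast
  have "sm e w = sm (e * \<iota> (inverse pF ^ m)) (sm (\<iota> (pF ^ m)) w)"
    by (simp add: sm_mult[symmetric] mult.assoc iota_pow_inv sm_one)
  then show ?thesis using LA1[OF k m] by simp
qed

lemma PA5: "k \<le> N - 1 \<Longrightarrow> l \<le> N - 1 \<Longrightarrow> k \<noteq> l \<Longrightarrow> z \<in> Fsp (parts k) \<Longrightarrow> y \<in> parts l \<Longrightarrow> B z y = 0"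
proof -
  assume k: "k \<le> N - 1" and l: "l \<le> N - 1" and kl: "k \<noteq> l" and z: "z \<in> Fsp (parts k)" and y: "y \<in> parts l"
  have kN: "k \<le> N" "k \<noteq> N" and lN: "l \<le> N" "l \<noteq> N" using k l N2 by arith+
  show "B z y = 0"
  proof (cases "k = N - 2")
    case True
    then have l2: "l \<noteq> N - 2" using kl by simp
    then have yl: "y \<in> Ls l" using y parts_other by simp
    obtain m where "sm (\<iota> (pF ^ m)) z \<in> parts k" using z unfolding Fsp_iff by blast
    then obtain a b where ab: "sm (\<iota> (pF ^ m)) z = a + b" "a \<in> Ls (N - 2)" "b \<in> P"
      using True parts_N2 by auto
    have "B a y = 0" using orth[of "N - 2" l a y] ab(2) yl l2 lN by simp
    moreover have "B b y = 0" using Bb_a[OF lN ab(3) yl] .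
    ultimately have "B (sm (\<iota> (pF ^ m)) z) y = 0" using ab(1) by (simp add: B_add)
    then have "\<iota> (pF ^ m) * B z y = 0" by (simp add: B_smult)
    then show ?thesis by (rule B_cancel1)
  next
    case False
    then have zk: "z \<in> Fsp (Ls k)" using z parts_other by simp
    show ?thesis
    proof (cases "l = N - 2")
      case True
      then obtain a b where ab: "y = a + b" "a \<in> Ls (N - 2)" "b \<in> P" using y parts_N2 by auto
      have "B z a = 0" using LA5[of k "N - 2" z a] kN False ab(2) zk by simp
      moreover have "B z b = 0" using Ba_b[OF kN zk ab(3)] .
      ultimately show ?thesis using ab(1) by (simp add: B_add2)
    next
      case False
      then show ?thesis using LA5[of k l z y] kN lN kl zk y parts_other by simp
    qed
  qed
qed

lemma PA6: "k \<le> N - 1 \<Longrightarrow> z \<in> Fsp (parts k) \<Longrightarrow> \<forall>y\<in>parts k. B z y \<in> OE \<Longrightarrow> sm (pE ^ k) z \<in> parts k"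
proof -
  assume k: "k \<le> N - 1" and z: "z \<in> Fsp (parts k)" and h: "\<forall>y\<in>parts k. B z y \<in> OE"
  show ?thesis
  proof (cases "k = N - 2")
    case False
    then show ?thesis using Ld[of k z] k z h parts_other by simp
  next
    case True
    obtain m where "sm (\<iota> (pF ^ m)) z \<in> parts k" using z unfolding Fsp_iff by blast
    then obtain a b where ab: "sm (\<iota> (pF ^ m)) z = a + b" "a \<in> Ls (N - 2)" "b \<in> P"
      using True parts_N2 by auto
    define za zb where "za = sm (\<iota> (inverse pF ^ m)) a" "zb = sm (\<iota> (inverse pF ^ m)) b"
    have zeq: "z = za + zb"
    proof -
      have "z = sm (\<iota> (inverse pF ^ m)) (sm (\<iota> (pF ^ m)) z)"
        by (simp add: sm_mult[symmetric] iota_pow_inv sm_one)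
      then show ?thesis unfolding za_zb_def ab(1) sm_add .
    qed
    have N2le: "N - 2 \<le> N" "N - 2 \<noteq> N" using N2 by arith+
    have zaF: "za \<in> Fsp (Ls (N - 2))" unfolding za_zb_def using LA1F[OF N2le(1)] ab(2) sub_Fsp by blast
    have zbF: "zb \<in> Fsp (Ls N)" unfolding za_zb_def using LA1F[OF order_refl P_Fsp[OF ab(3)]] .
    have "\<forall>y\<in>Ls (N - 2). B za y \<in> OE"
    proof
      fix y assume y: "y \<in> Ls (N - 2)"
      have "y + 0 \<in> parts k" using True parts_N2 y P0 by blast
      then have "B z y \<in> OE" using h by simp
      moreover have "B zb y = 0" using LA5[OF order_refl N2le(1) _ zbF y] N2le(2) by simp
      ultimately show "B za y \<in> OE" using zeq by (simp add: B_add)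
    qed
    then have a2: "sm (pE ^ (N - 2)) za \<in> Ls (N - 2)" using Ld[OF N2le(1)] zaF by blast
    have "\<forall>y\<in>Ls N. B (sm pEi zb) y \<in> OE"
    proof
      fix bt assume bt: "bt \<in> Ls N"
      define y where "y = sm pEi bt"
      have yP: "y \<in> P" unfolding y_def using bt by (simp add: sm_mult[symmetric] pi1 sm_one)
      have "0 + y \<in> parts k" using True parts_N2 yP Ls0[OF N2le(1)] by blast
      then have "B z y \<in> OE" using h by simp
      moreover have "B za y = 0" using Ba_b[OF N2le zaF yP] .
      ultimately have "B zb y \<in> OE" using zeq by (simp add: B_add)
      then have "B zb bt * \<sigma> pEi \<in> OE" unfolding y_def by (simp add: B_smult2)
      then obtain s where s: "s \<in> OE" "B zb bt * \<sigma> pEi * \<sigma> pE = pE * s" using K2 by blast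
      have "\<sigma> pEi * \<sigma> pE = 1" using arg_cong[OF pi1, of \<sigma>] ri_mult[OF ri] ri_one[OF ri] by simp
      then have "B zb bt = pE * s" using s(2) by (simp add: mult.assoc)
      then have "B (sm pEi zb) bt = s" by (simp add: B_smult mult.assoc[symmetric] pi2)
      then show "B (sm pEi zb) bt \<in> OE" using s(1) by simp
    qed
    moreover have "sm pEi zb \<in> Fsp (Ls N)" using LA1F[OF order_refl zbF] .
    ultimately have "sm (pE ^ N) (sm pEi zb) \<in> Ls N" using Ld[OF order_refl] by blast
    moreover have "sm (pE ^ N) (sm pEi zb) = sm pE (sm (pE ^ (N - 2)) zb)"
    proof -
      have "pE ^ N * pEi = pE * pE ^ (N - 2)"
        unfolding pw by (simp add: mult.assoc pi1)
      then show ?thesis by (simp add: sm_mult[symmetric])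
    qed
    ultimately have b2: "sm (pE ^ (N - 2)) zb \<in> P" by simp
    have "sm (pE ^ k) z = sm (pE ^ (N - 2)) za + sm (pE ^ (N - 2)) zb" using True zeq sm_add by simp
    then show ?thesis using a2 b2 True parts_N2 by blast
  qed
qed

lemma PA7: "k \<le> N - 1 \<Longrightarrow> x \<in> parts k \<Longrightarrow> y \<in> parts k \<Longrightarrow> \<exists>e\<in>OE. B x y = pE ^ k * e"
proof -
  assume k: "k \<le> N - 1" and x: "x \<in> parts k" and y: "y \<in> parts k"
  show ?thesis
  proof (cases "k = N - 2")
    case False
    then show ?thesis using LA7[of k x y] k x y parts_other by simp
  next
    case True
    have N2le: "N - 2 \<le> N" "N - 2 \<noteq> N" using N2 by arith+
    obtain a b where ab: "x = a + b" "a \<in> Ls (N - 2)" "b \<in> P" using x True parts_N2 by auto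
    obtain a' b' where ab': "y = a' + b'" "a' \<in> Ls (N - 2)" "b' \<in> P" using y True parts_N2 by auto
    have "B x y = B a a' + B a b' + (B b a' + B b b')"
      unfolding ab(1) ab'(1) by (simp add: B_add B_add2)
    moreover have "B a b' = 0" using Ba_b[OF N2le _ ab'(3)] ab(2) sub_Fsp by blast
    moreover have "B b a' = 0" using Bb_a[OF N2le ab(3) ab'(2)] .
    moreover obtain e1 where e1: "e1 \<in> OE" "B a a' = pE ^ (N - 2) * e1" using LA7[OF N2le(1) ab(2) ab'(2)] by blast
    moreover obtain y1 where y1: "y1 \<in> OE" "B b b' = pE ^ (N - 2) * y1"
    proof -
      obtain e2 where e2: "e2 \<in> OE" "B (sm pE b) (sm pE b') = pE ^ N * e2"
        using LA7[OF order_refl, of "sm pE b" "sm pE b'"] ab(3) ab'(3) by auto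
      obtain y2 where y2: "y2 \<in> OE" "pE * e2 = y2 * \<sigma> pE" using K1[OF e2(1)] by blast
      have "pE * (B b b' * \<sigma> pE) = pE * (pE ^ (N - 2) * y2 * \<sigma> pE)"
      proof -
        have "pE * (B b b' * \<sigma> pE) = B (sm pE b) (sm pE b')" by (simp add: B_smult B_smult2 mult.assoc)
        also have "\<dots> = pE * pE ^ (N - 2) * (pE * e2)"
          unfolding e2(2) pw by (simp add: mult.assoc)
        also have "\<dots> = pE * (pE ^ (N - 2) * y2 * \<sigma> pE)" unfolding y2(2) by (simp add: mult.assoc)
        finally show ?thesis .
      qed
      then have "pE * (B b b' * \<sigma> pE - pE ^ (N - 2) * y2 * \<sigma> pE) = 0" by (simp add: right_diff_distrib)
      then have "B b b' * \<sigma> pE - pE ^ (N - 2) * y2 * \<sigma> pE = 0" by (rule pEi_cancel)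
      then have "(B b b' - pE ^ (N - 2) * y2) * \<sigma> pE = 0" by (simp add: left_diff_distrib)
      then have "B b b' - pE ^ (N - 2) * y2 = 0" by (rule spE_cancel)
      then show ?thesis using that y2(1) by simp
    qed
    ultimately have "B x y = pE ^ (N - 2) * (e1 + y1)" by (simp add: distrib_left)
    moreover have "e1 + y1 \<in> OE" using OF_order_add[OF ord e1(1) y1(1)] .
    ultimately show ?thesis using True by blast
  qed
qed

lemma case_Lp:
  assumes g: "g \<in> stabiliser sm B (Lprime sm pE Ls N)" and ij: "i \<le> j" "j \<le> N - 1" and x: "x \<in> parts j"
  shows "component sm \<iota> pF parts (N - 1) (g x) i \<in> pE_pow sm pE (int j - int i) (parts i)"
proof -
  have A1: "\<And>k c e. k \<le> N - 1 \<Longrightarrow> c \<in> parts k \<Longrightarrow> sm e c \<in> Fsp (parts k)" by (rule PA1)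
  have A2: "\<And>k. k \<le> N - 1 \<Longrightarrow> parts k \<subseteq> Lprime sm pE Ls N" by (rule PA2)
  have A3: "\<And>m. m \<in> Lprime sm pE Ls N \<Longrightarrow> \<exists>c. (\<forall>k\<le>N - 1. c k \<in> parts k) \<and> m = (\<Sum>k\<le>N - 1. c k)"
    by (rule PA3)
  have A4: "\<And>y. \<exists>m. sm (\<iota> (pF ^ m)) y \<in> Lprime sm pE Ls N" by (rule PA4)
  have A5: "\<And>k l z y. k \<le> N - 1 \<Longrightarrow> l \<le> N - 1 \<Longrightarrow> k \<noteq> l \<Longrightarrow> z \<in> Fsp (parts k) \<Longrightarrow> y \<in> parts l \<Longrightarrow> B z y = 0"
    by (rule PA5)
  have A6: "\<And>k z. k \<le> N - 1 \<Longrightarrow> z \<in> Fsp (parts k) \<Longrightarrow> \<forall>y\<in>parts k. B z y \<in> OE \<Longrightarrow> sm (pE ^ k) z \<in> parts k"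
    by (rule PA6)
  have A7: "\<And>k x y. k \<le> N - 1 \<Longrightarrow> x \<in> parts k \<Longrightarrow> y \<in> parts k \<Longrightarrow> \<exists>e\<in>OE. B x y = pE ^ k * e"
    by (rule PA7)
  show ?thesis
    by (rule main_abstract[where M="Lprime sm pE Ls N" and Ms=parts and n="N - 1", OF A1 A2 A3 A4 A5 A6 A7 g ij x])
qed

end


theorem lemma3p8:
  fixes vF :: "'f::field \<Rightarrow> int" and \<pi>F :: 'f
    and \<iota> :: "'f \<Rightarrow> 'e::ring_1" and \<sigma> :: "'e \<Rightarrow> 'e" and \<epsilon> :: int
    and OE :: "'e set" and \<pi>E :: 'e
    and sm :: "'e \<Rightarrow> 'v::ab_group_add \<Rightarrow> 'v" and B :: "'v \<Rightarrow> 'v \<Rightarrow> 'e"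
    and L :: "'v set" and Ls :: "nat \<Rightarrow> 'v set" and N :: nat
    and M :: "'v set" and Ms :: "nat \<Rightarrow> 'v set" and n :: nat
    and g :: "'v \<Rightarrow> 'v" and x :: 'v and i j :: nat
  assumes F: "nonarch_local_field vF \<pi>F"
    and alg: "F_algebra \<iota>"
    and eps: "\<epsilon> = 1 \<or> \<epsilon> = -1"
    and Esig: "herm_pair \<iota> \<sigma>"
    and OE: "maximal_order \<iota> vF OE"
    and unif: "if ramified \<iota> \<sigma> OE \<pi>F \<or> case_quaternion \<iota> \<sigma>
               then E_uniformiser OE \<pi>E else \<pi>E = \<iota> \<pi>F"
    and p2: "ramified \<iota> \<sigma> OE \<pi>F \<or> (case_F \<iota> \<sigma> \<and> \<epsilon> = 1) \<longrightarrow> res_char_not_2 vF"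
    and V: "left_module sm"
    and form: "herm_form sm \<sigma> \<epsilon> B"
    and nd: "nondegenerate B"
    and L: "herm_lattice sm \<iota> \<pi>F OE B L"
    and J: "jordan_splitting sm \<iota> \<pi>F OE \<pi>E B L Ls N"
    and N2: "2 \<le> N"
    and Mchoice: "(M = L \<and> Ms = Ls \<and> n = N) \<or>
                  (M = Lprime sm \<pi>E Ls N \<and> Ms = Lprime_parts sm \<pi>E Ls N \<and> n = N - 1)"
    and ij: "i \<le> j" and jn: "j \<le> n"
    and g: "g \<in> stabiliser sm B M"
    and x: "x \<in> Ms j"
  shows "component sm \<iota> \<pi>F Ms n (g x) i \<in> pE_pow sm \<pi>E (int j - int i) (Ms i)"
proof -
  have ord: "OF_order \<iota> vF OE" using OE unfolding maximal_order_def by blast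
  have sf: "ring_involution \<sigma>" "\<And>a. \<sigma> (\<iota> a) = \<iota> a" using sigma_facts[OF alg Esig] by auto
  obtain pEi where pe: "\<pi>E * pEi = 1" "pEi * \<pi>E = 1" "\<pi>E \<in> OE"
    "\<And>s. s \<in> OE \<Longrightarrow> \<exists>y\<in>OE. \<pi>E * s = y * \<sigma> \<pi>E" "\<And>y. y \<in> OE \<Longrightarrow> \<exists>s\<in>OE. y * \<sigma> \<pi>E = \<pi>E * s"
    using E_facts[OF F alg Esig OE unif] by blast
  have H7: "\<And>e. \<exists>m. \<iota> (\<pi>F ^ m) * e \<in> OE" using denom_pow[OF F alg ord] by blast
  have pF: "\<pi>F \<noteq> 0" using nlf_p[OF F] by auto
  have iOE: "\<And>m. \<iota> (\<pi>F ^ m) \<in> OE"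
    using OF_order_power[OF ord OF_order_OF[OF ord OF_closed(5)[OF F]]] Falg_power[OF alg] by metis
  have Lspan: "Fspan sm \<iota> \<pi>F L = UNIV" using L unfolding herm_lattice_def by blast
  interpret js: jsetting2 sm \<iota> \<pi>F OE \<pi>E pEi \<sigma> \<epsilon> B vF L Ls N
    by (unfold_locales) (fact alg V form nd sf pe H7 ord pF J Lspan iOE N2)+
  show ?thesis using Mchoice
  proof (elim disjE conjE)
    assume "M = L" "Ms = Ls" "n = N"
    then show ?thesis using js.case_L[of g i j x] g ij jn x by simp
  next
    assume "M = Lprime sm \<pi>E Ls N" "Ms = Lprime_parts sm \<pi>E Ls N" "n = N - 1"
    then show ?thesis using js.case_Lp[of g i j x] g ij jn x by simp
  qed
qed


end
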